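(* Let $\ell=(\ell_k)_{k\ge1}$ be a non-increasing sequence with $0<\ell_k<1$ and let $1<p\le2$. Let $(\omega_k)_{k\ge1}$ be i.i.d. uniform on $\mathbb{T}=\mathbb{R}/\mathbb{Z}$, $I_k=(\omega_k,\omega_k+\ell_k)$, $X_j(t)=\frac{1-\mathds{1}_{I_j}(t)}{1-\ell_j}$, $M_k(t)=\prod_{j=1}^kX_j(t)$ (with $M_0\equiv1$), and $D_k(t)=M_k(t)-M_{k-1}(t)$ for $k\ge2$, $D_1(t)=M_1(t)$, viewed as $1$-periodic functions. Then there is a constant $C$ depending only on $p$ and $\ell$ such that: (i) for all $k\ge1$ and $h>0$, $$\mathbb{E}\Big[\Big(\int_0^1|D_k(t+h)-D_k(t)|\,dt\Big)^p\Big]\le C\,(h^p+hk\ell_k^p)\prod_{j=1}^{k-1}(1-\ell_j)^{1-p};$$ (ii) for all $k\ge1$, $$\mathbb{E}\Big[\Big(\int_0^1|D_k(t)|\,dt\Big)^p\Big]\le C\,\ell_k^p\prod_{j=1}^{k-1}(1-\ell_j)^{1-p}.$$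
   Context: Empty products equal $1$. $\mathbb{T}=\mathbb{R}/\mathbb{Z}$ is identified with $[0,1)$. *)

theory Defs
  imports "HOL-Probability.Probability"
begin

text \<open>The circle T = R/Z is identified with [0,1). For a sample point,
  om :: nat => real gives the values omega_j, and l :: nat => real the lengths.
  The arc I_j = (omega_j, omega_j + l_j) taken mod 1 contains t iff
  frac(t - omega_j) lies in the open interval (0, l_j) (since 0 < l_j < 1).
  All functions below are 1-periodic in t.\<close>

definition arc_ind :: "(nat \<Rightarrow> real) \<Rightarrow> (nat \<Rightarrow> real) \<Rightarrow> nat \<Rightarrow> real \<Rightarrow> real" where
  "arc_ind l om j t = (if 0 < frac (t - om j) \<and> frac (t - om j) < l j then 1 else 0)"

definition Xf :: "(nat \<Rightarrow> real) \<Rightarrow> (nat \<Rightarrow> real) \<Rightarrow> nat \<Rightarrow> real \<Rightarrow> real" where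
  "Xf l om j t = (1 - arc_ind l om j t) / (1 - l j)"

definition Mf :: "(nat \<Rightarrow> real) \<Rightarrow> (nat \<Rightarrow> real) \<Rightarrow> nat \<Rightarrow> real \<Rightarrow> real" where
  "Mf l om k t = (\<Prod>j\<in>{1..k}. Xf l om j t)"

definition Df :: "(nat \<Rightarrow> real) \<Rightarrow> (nat \<Rightarrow> real) \<Rightarrow> nat \<Rightarrow> real \<Rightarrow> real" where
  "Df l om k t = (if k = 1 then Mf l om 1 t else Mf l om k t - Mf l om (k - 1) t)"

end

theory Submission
  imports Defs
begin

definition aF :: "real \<Rightarrow> real \<Rightarrow> real" where
  "aF L v = (if 0 < frac v \<and> frac v < L then 1 else 0)"

definition xF :: "real \<Rightarrow> real \<Rightarrow> real" where
  "xF L v = (1 - aF L v) / (1 - L)"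

lemma arc_ind_aF: "arc_ind l om j t = aF (l j) (t - om j)"
  by (simp add: arc_ind_def aF_def)

lemma Xf_xF: "Xf l om j t = xF (l j) (t - om j)"
  by (simp add: Xf_def xF_def arc_ind_aF)

lemma frac_meas[measurable]: "(frac :: real \<Rightarrow> real) \<in> borel_measurable borel"
proof -
  have [measurable]: "(\<lambda>x::real. real_of_int \<lfloor>x\<rfloor>) \<in> borel_measurable borel"
    by (rule borel_measurable_real_floor)
  show ?thesis unfolding frac_def
    using borel_measurable_real_floor by (rule borel_measurable_diff[rotated]) simp
qed

lemma aF_meas[measurable]: "aF L \<in> borel_measurable borel"
  unfolding aF_def by measurable

lemma xF_meas[measurable]: "xF L \<in> borel_measurable borel"
  unfolding xF_def by measurable

lemma aF_per: "aF L (v + 1) = aF L v"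
  by (simp add: aF_def frac_1_eq)

lemma xF_per: "xF L (v + 1) = xF L v"
  by (simp add: xF_def aF_per)

lemma aF_01: "aF L v = 0 \<or> aF L v = 1"
  by (simp add: aF_def)

lemma per_int_shift:
  fixes \<psi> :: "real \<Rightarrow> real"
  assumes per: "\<And>v. \<psi> (v + 1) = \<psi> v"
  shows "\<psi> (v + real_of_int n) = \<psi> v"
proof (induction n rule: int_induct[where k=0])
  case base then show ?case by simp
next
  case (step1 i) then show ?case using per[of "v + real_of_int i"] by (simp add: add.assoc)
next
  case (step2 i) then show ?case using per[of "v + real_of_int (i - 1)"] by (simp add: add.assoc)
qed

lemma integrable_bdd:
  fixes f :: "real \<Rightarrow> real"
  assumes [measurable]: "f \<in> borel_measurable borel" and bd: "\<And>v. \<bar>f v\<bar> \<le> b"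
  shows "integrable lborel (\<lambda>x. indicator {a..c} x * f x)"
proof -
  have "emeasure lborel {a..c} < \<infinity>" by (cases "a \<le> c") auto
  then have i: "integrable lborel (\<lambda>x. b * indicator {a..c} x)"
    by (intro integrable_mult_right integrable_real_indicator) auto
  have "AE x in lborel. norm (indicator {a..c} x * f x) \<le> norm (b * indicator {a..c} x)"
    using bd by (auto simp: indicator_def intro!: always_eventually) (metis abs_ge_zero abs_of_nonneg order_trans bd)
  from Bochner_Integration.integrable_bound[OF i _ this] show ?thesis by simp
qed

lemma integrable_bdd_sub:
  fixes f :: "real \<Rightarrow> real"
  assumes [measurable]: "f \<in> borel_measurable borel" "S \<in> sets borel" and bd: "\<And>v. \<bar>f v\<bar> \<le> b"
    and sub: "S \<subseteq> {a..c}"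
  shows "integrable lborel (\<lambda>x. indicator S x * f x)"
proof -
  have "emeasure lborel {a..c} < \<infinity>" by (cases "a \<le> c") auto
  then have i: "integrable lborel (\<lambda>x. b * indicator {a..c} x)"
    by (intro integrable_mult_right integrable_real_indicator) auto
  have "AE x in lborel. norm (indicator S x * f x) \<le> norm (b * indicator {a..c} x)"
    using bd sub by (auto simp: indicator_def intro!: always_eventually) (metis abs_ge_zero abs_of_nonneg order_trans bd)
  from Bochner_Integration.integrable_bound[OF i _ this] show ?thesis by simp
qed

lemma per_int:
  fixes \<psi> :: "real \<Rightarrow> real"
  assumes m[measurable]: "\<psi> \<in> borel_measurable borel" and bd: "\<And>v. \<bar>\<psi> v\<bar> \<le> b"
    and per: "\<And>v. \<psi> (v + 1) = \<psi> v"
  shows "(LINT u:{0..1}|lborel. \<psi> (t - u)) = (LINT s:{0..1}|lborel. \<psi> s)"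
proof -
  define c where "c = frac t"
  have c: "0 \<le> c" "c < 1" unfolding c_def by (auto simp: frac_lt_1)
  have sh: "\<psi> (t - u) = \<psi> (c - u)" for u
  proof -
    have "t - u = (c - u) + real_of_int \<lfloor>t\<rfloor>" unfolding c_def frac_def by simp
    then have "\<psi> (t - u) = \<psi> ((c - u) + real_of_int \<lfloor>t\<rfloor>)" by (rule arg_cong)
    also have "\<dots> = \<psi> (c - u)" by (rule per_int_shift[of \<psi>, OF per])
    finally show ?thesis .
  qed
  have "(LINT u:{0..1}|lborel. \<psi> (t - u)) = (\<integral>u. indicator {0..1} u * \<psi> (c - u) \<partial>lborel)"
    by (simp add: set_lebesgue_integral_def sh)
  also have "\<dots> = (\<integral>u. indicator {0<..1} u * \<psi> (c - u) \<partial>lborel)"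
  proof (rule integral_cong_AE)
    show "AE x in lborel. indicator {0..1} x * \<psi> (c - x) = indicator {0<..1} x * \<psi> (c - x)"
      using AE_lborel_singleton[of 0] by eventually_elim (auto simp: indicator_def)
  qed measurable
  also have "\<dots> = (\<integral>v. indicator {c-1..<c} v * \<psi> v \<partial>lborel)"
  proof -
    have "(\<integral>v. indicator {c-1..<c} v * \<psi> v \<partial>lborel)
        = \<bar>-1\<bar> *\<^sub>R (\<integral>u. indicator {c-1..<c} (c + (-1) * u) * \<psi> (c + (-1) * u) \<partial>lborel)"
      by (rule lborel_integral_real_affine) simp
    also have "\<dots> = (\<integral>u. indicator {0<..1} u * \<psi> (c - u) \<partial>lborel)"
    proof -
      have eq: "\<And>u. indicator {c-1..<c} (c + (-1) * u) * \<psi> (c + (-1) * u) = (indicator {0<..1} u * \<psi> (c - u) :: real)"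
        by (auto simp: indicator_def)
      show ?thesis by (simp only: eq) simp
    qed
    finally show ?thesis by simp
  qed
  also have "\<dots> = (\<integral>v. indicator {c-1..<0} v * \<psi> v \<partial>lborel) + (\<integral>v. indicator {0..<c} v * \<psi> v \<partial>lborel)"
  proof -
    have "(\<integral>v. indicator {c-1..<c} v * \<psi> v \<partial>lborel) = (\<integral>v. indicator {c-1..<0} v * \<psi> v + indicator {0..<c} v * \<psi> v \<partial>lborel)"
      using c by (intro Bochner_Integration.integral_cong refl) (auto simp: indicator_def)
    also have "\<dots> = (\<integral>v. indicator {c-1..<0} v * \<psi> v \<partial>lborel) + (\<integral>v. indicator {0..<c} v * \<psi> v \<partial>lborel)"
      by (intro Bochner_Integration.integral_add integrable_bdd_sub[where a="-1" and c=1 and b=b] bd) (use c in auto)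
    finally show ?thesis .
  qed
  also have "(\<integral>v. indicator {c-1..<0} v * \<psi> v \<partial>lborel) = (\<integral>w. indicator {c..<1} w * \<psi> w \<partial>lborel)"
  proof -
    have "(\<integral>v. indicator {c-1..<0} v * \<psi> v \<partial>lborel)
        = \<bar>1\<bar> *\<^sub>R (\<integral>w. indicator {c-1..<0} (-1 + 1 * w) * \<psi> (-1 + 1 * w) \<partial>lborel)"
      by (rule lborel_integral_real_affine) simp
    also have "\<dots> = (\<integral>w. indicator {c..<1} w * \<psi> w \<partial>lborel)"
    proof -
      have "\<And>w. indicator {c-1..<0} (-1 + 1 * w) * \<psi> (-1 + 1 * w) = (indicator {c..<1} w * \<psi> w :: real)"
      proof -
        fix w
        have "\<psi> (-1 + w) = \<psi> w" using per[of "-1 + w"] by simp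
        then show "indicator {c-1..<0} (-1 + 1 * w) * \<psi> (-1 + 1 * w) = (indicator {c..<1} w * \<psi> w :: real)"
          by (auto simp: indicator_def)
      qed
      then show ?thesis by simp
    qed
    finally show ?thesis by simp
  qed
  also have "(\<integral>w. indicator {c..<1} w * \<psi> w \<partial>lborel) + (\<integral>v. indicator {0..<c} v * \<psi> v \<partial>lborel)
      = (\<integral>w. indicator {c..<1} w * \<psi> w + indicator {0..<c} w * \<psi> w \<partial>lborel)"
    by (intro Bochner_Integration.integral_add[symmetric] integrable_bdd_sub[where a="-1" and c=1 and b=b] bd) (use c in auto)
  also have "\<dots> = (\<integral>w. indicator {0..<1} w * \<psi> w \<partial>lborel)"
    using c by (intro Bochner_Integration.integral_cong refl) (auto simp: indicator_def)
  also have "\<dots> = (\<integral>w. indicator {0..1} w * \<psi> w \<partial>lborel)"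
  proof (rule integral_cong_AE)
    show "AE x in lborel. indicator {0..<1} x * \<psi> x = indicator {0..1} x * \<psi> x"
      using AE_lborel_singleton[of 1] by eventually_elim (auto simp: indicator_def)
  qed measurable
  finally show ?thesis by (simp add: set_lebesgue_integral_def)
qed

lemma per_int2:
  fixes \<psi> :: "real \<Rightarrow> real"
  assumes m[measurable]: "\<psi> \<in> borel_measurable borel" and bd: "\<And>v. \<bar>\<psi> v\<bar> \<le> b"
    and per: "\<And>v. \<psi> (v + 1) = \<psi> v"
  shows "(LINT u:{0..1}|lborel. \<psi> (u - c)) = (LINT s:{0..1}|lborel. \<psi> s)"
proof -
  have per': "\<psi> (- (v + 1)) = \<psi> (- v)" for v
    using per[of "- v - 1"] by simp
  have "(LINT u:{0..1}|lborel. \<psi> (u - c)) = (LINT u:{0..1}|lborel. (\<lambda>v. \<psi> (- v)) (c - u))"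
    by simp
  also have "\<dots> = (LINT s:{0..1}|lborel. (\<lambda>v. \<psi> (- v)) s)"
    by (rule per_int[where b=b]) (use bd per' in auto)
  also have "\<dots> = (LINT s:{0..1}|lborel. \<psi> (0 - s))" by simp
  also have "\<dots> = (LINT s:{0..1}|lborel. \<psi> s)"
    by (rule per_int[where b=b]) (use bd per in auto)
  finally show ?thesis .
qed

lemma per_int3:
  fixes \<psi> :: "real \<Rightarrow> real"
  assumes m[measurable]: "\<psi> \<in> borel_measurable borel" and bd: "\<And>v. \<bar>\<psi> v\<bar> \<le> b"
    and per: "\<And>v. \<psi> (v + 1) = \<psi> v"
  shows "(LINT u:{0..1}|lborel. \<psi> (u + h)) = (LINT s:{0..1}|lborel. \<psi> s)"
  using per_int2[OF m bd per, of "-h"] by simp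

lemma lint_eq_ind: fixes f :: "real \<Rightarrow> real" shows "(LINT s:{0..1}|lborel. f s) = (\<integral>s. indicator {0..1} s * f s \<partial>lborel)"
  by (simp add: set_lebesgue_integral_def)

lemma aF_on01:
  assumes "0 \<le> s" "s \<le> 1" "L \<le> 1"
  shows "aF L s = indicator {0<..<L} s"
proof (cases "s = 1")
  case True then show ?thesis using assms(3) by (auto simp: aF_def indicator_def)
next
  case False
  then have "frac s = s" using assms by (simp add: frac_eq)
  then show ?thesis by (auto simp: aF_def indicator_def)
qed

lemma int_aF:
  assumes "0 \<le> L" "L \<le> 1"
  shows "(LINT s:{0..1}|lborel. aF L s) = L"
proof -
  have "(LINT s:{0..1}|lborel. aF L s) = (\<integral>s. indicator {0<..<L} s \<partial>lborel)"
    unfolding lint_eq_ind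
    by (intro Bochner_Integration.integral_cong refl) (use assms aF_on01 in \<open>auto simp: indicator_def\<close>)
  also have "\<dots> = L" using assms by simp
  finally show ?thesis .
qed

lemma xF_powr:
  assumes "0 < L" "L < 1" "0 < p"
  shows "xF L v powr p = (1 - aF L v) * (1 - L) powr (- p)"
proof -
  have "inverse (1-L) powr p = inverse((1-L) powr p)" using assms by (simp add: powr_def ln_inverse exp_minus)
  then show ?thesis using aF_01[of L v] assms
  by (auto simp: xF_def powr_divide powr_minus divide_inverse)
qed

lemma aF_abs_le: "\<bar>aF L v\<bar> \<le> 1"
  using aF_01[of L v] by auto

lemma emeas_Icc_fin[simp]: "emeasure lborel {a..b::real} < \<top>"
  by (cases "a \<le> b") auto

lemma daF_le1: "\<bar>aF L x - aF L' y\<bar> \<le> 1"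
  using aF_01[of L x] aF_01[of L' y] by auto

lemma xF_nonneg: "L < 1 \<Longrightarrow> 0 \<le> xF L v"
  using aF_01[of L v] by (auto simp: xF_def)

lemma xF_le: "L < 1 \<Longrightarrow> xF L v \<le> 1 / (1 - L)"
  using aF_01[of L v] by (auto simp: xF_def divide_right_mono)

lemma int_one: "(LINT (s::real):{0..1}|lborel. (1::real)) = (1::real)"
  unfolding set_lebesgue_integral_def by simp

lemma int_lin:
  fixes f :: "real \<Rightarrow> real"
  assumes [measurable]: "f \<in> borel_measurable borel" and bd: "\<And>v. \<bar>f v\<bar> \<le> b"
  shows "(LINT s:{0..1}|lborel. a + c * f s) = a + c * (LINT s:{0..1}|lborel. f s)"
proof -
  have i1: "integrable lborel (\<lambda>s::real. indicator {0..1} s * a)"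
    by (intro integrable_mult_left integrable_real_indicator) auto
  have i2: "integrable lborel (\<lambda>s. indicator {0..1} s * (c * f s))"
    using integrable_bdd[OF _ bd, where a=0 and c=1] by (simp add: mult.left_commute integrable_mult_right)
  have "(LINT s:{0..1}|lborel. a + c * f s) = (\<integral>s. indicator {0..1} s * a + indicator {0..1} s * (c * f s) \<partial>lborel)"
    unfolding lint_eq_ind by (simp add: algebra_simps)
  also have "\<dots> = (\<integral>s. indicator {0..1} (s::real) * a \<partial>lborel) + (\<integral>s. indicator {0..1} s * (c * f s) \<partial>lborel)"
    using i1 i2 by (rule Bochner_Integration.integral_add)
  also have "(\<integral>s. indicator {0..1} (s::real) * a \<partial>lborel) = a" by simp
  also have "(\<integral>s. indicator {0..1} s * (c * f s) \<partial>lborel) = c * (\<integral>s. indicator {0..1} s * f s \<partial>lborel)"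
    by (simp add: mult.left_commute)
  finally show ?thesis unfolding lint_eq_ind .
qed

lemma int_xF_powr:
  assumes "0 < L" "L < 1" "0 < p"
  shows "(LINT s:{0..1}|lborel. xF L s powr p) = (1 - L) powr (1 - p)"
proof -
  define K where "K = (1 - L) powr (- p)"
  have "(LINT s:{0..1}|lborel. xF L s powr p) = (LINT s:{0..1}|lborel. K + (- K) * aF L s)"
    using assms by (simp add: xF_powr algebra_simps K_def)
  also have "\<dots> = K + (- K) * L"
    by (subst int_lin[where b=1]) (use assms aF_abs_le int_aF in auto)
  also have "\<dots> = (1 - L) * (1 - L) powr (- p)" by (simp add: algebra_simps K_def)
  also have "\<dots> = (1 - L) powr (1 - p)"
    using assms by (simp add: powr_diff powr_minus divide_inverse)
  finally show ?thesis .
qed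

lemma daF_pt:
  assumes "0 \<le> s" "s \<le> 1" "0 < h" "0 < L" "L < 1"
  shows "\<bar>aF L (s + h) - aF L s\<bar> \<le> indicator {L-h..L} s + indicator {1-h..1} s + indicator {0..0} s"
proof (cases "1 - h \<le> s")
  case True
  then show ?thesis using assms aF_01[of L s] aF_01[of L "s+h"] by (auto simp: indicator_def)
next
  case False
  then have "frac s = s" "frac (s + h) = s + h" using assms by (auto simp: frac_eq)
  then show ?thesis using assms False by (auto simp: aF_def indicator_def)
qed

lemma int_daF:
  assumes "0 < h" "0 < L" "L < 1"
  shows "(LINT s:{0..1}|lborel. \<bar>aF L (s + h) - aF L s\<bar>) \<le> 2 * h"
proof -
  have "(LINT s:{0..1}|lborel. \<bar>aF L (s + h) - aF L s\<bar>)
     \<le> (\<integral>s. indicator {L-h..L} s + indicator {1-h..1} s + indicator {0..0} s \<partial>lborel)"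
    unfolding lint_eq_ind
  proof (rule integral_mono)
    show "integrable lborel (\<lambda>s. indicator {0..1} s * \<bar>aF L (s + h) - aF L s\<bar>)"
      by (rule integrable_bdd[where b=1]) (auto simp: daF_le1)
    show "integrable lborel (\<lambda>s. indicator {L-h..L} s + indicator {1-h..1} s + indicator {0..0} s :: real)"
      by (intro Bochner_Integration.integrable_add integrable_real_indicator) auto
    fix s show "indicator {0..1} s * \<bar>aF L (s + h) - aF L s\<bar> \<le> indicator {L-h..L} s + indicator {1-h..1} s + (indicator {0..0} s :: real)"
      using daF_pt[of s h L] assms by (cases "s \<in> {0..1}") (auto simp: indicator_def)
  qed
  also have "\<dots> = h + h + 0"
    using assms by (subst Bochner_Integration.integral_add; (subst Bochner_Integration.integral_add)?) (auto intro!: integrable_real_indicator)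
  finally show ?thesis by simp
qed

lemma tangent_powr:
  fixes x m p :: real
  assumes "0 \<le> x" "0 \<le> m" "1 \<le> p"
  shows "m powr p + p * m powr (p - 1) * (x - m) \<le> x powr p"
proof (cases "m = 0")
  case True then show ?thesis by simp
next
  case False
  then have m: "0 < m" using assms by simp
  have mm: "m powr (p - 1) * m = m powr p"
    using m by (simp add: powr_diff)
  show ?thesis
  proof (cases "x = 0")
    case True
    have "m powr p + p * m powr (p - 1) * (x - m) = (1 - p) * m powr p"
      using True mm by (simp add: algebra_simps)
    also have "\<dots> \<le> 0" using assms by (simp add: mult_nonpos_nonneg)
    finally show ?thesis using True by simp
  next
    case False
    then have x: "0 < x" using assms by simp
    have "p * m powr (p - 1) * (x - m) \<le> x powr p - m powr p"
    proof (rule convex_on_imp_above_tangent[where A="{0<..}"])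
      show "convex_on {0<..} (\<lambda>x. x powr p)" using powr_convex assms by auto
      show "connected {(0::real)<..}" by (simp add: is_interval_connected is_interval_ci)
      show "m \<in> interior {0<..}" using m by (simp add: interior_open open_greaterThan)
      show "x \<in> {0<..}" using x by simp
      show "((\<lambda>x. x powr p) has_field_derivative p * m powr (p - 1)) (at m within {0<..})"
        by (rule has_field_derivative_at_within[OF has_real_derivative_powr[OF m]])
    qed
    then show ?thesis by simp
  qed
qed

lemma sum_powr_le_aux:
  fixes a b p :: real
  assumes "0 \<le> a" "a \<le> b" "0 < p"
  shows "(a + b) powr p \<le> 2 powr p * (a powr p + b powr p)"
proof -
  have ab: "a + b \<le> 2 * b" using assms by linarith
  have "(a + b) powr p \<le> (2 * b) powr p"
    by (rule powr_mono2) (use assms ab in auto)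
  also have "\<dots> = 2 powr p * b powr p"
    using assms by (subst powr_mult) auto
  also have "\<dots> \<le> 2 powr p * (a powr p + b powr p)"
    by (intro mult_left_mono) auto
  finally show ?thesis .
qed

lemma sum_powr_le:
  fixes a b p :: real
  assumes "0 \<le> a" "0 \<le> b" "0 < p"
  shows "(a + b) powr p \<le> 2 powr p * (a powr p + b powr p)"
proof (cases "a \<le> b")
  case True then show ?thesis using sum_powr_le_aux assms by blast
next
  case False then show ?thesis using sum_powr_le_aux[of b a p] assms by (simp add: add.commute)
qed

definition BM :: "(real \<Rightarrow> real) \<Rightarrow> bool" where
  "BM g \<longleftrightarrow> g \<in> borel_measurable borel \<and> (\<exists>B. \<forall>v. \<bar>g v\<bar> \<le> B)"

lemma BM_I: "g \<in> borel_measurable borel \<Longrightarrow> (\<And>v. \<bar>g v\<bar> \<le> B) \<Longrightarrow> BM g"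
  unfolding BM_def by blast

lemma BM_meas: "BM g \<Longrightarrow> g \<in> borel_measurable borel"
  unfolding BM_def by blast

lemma BM_const: "BM (\<lambda>_. c)"
  by (rule BM_I[where B="\<bar>c\<bar>"]) auto

lemma BM_add: "BM f \<Longrightarrow> BM g \<Longrightarrow> BM (\<lambda>v. f v + g v)"
  unfolding BM_def
proof (elim conjE exE, intro conjI)
  fix B1 B2 assume [measurable]: "f \<in> borel_measurable borel" "g \<in> borel_measurable borel"
    and b: "\<forall>v. \<bar>f v\<bar> \<le> B1" "\<forall>v. \<bar>g v\<bar> \<le> B2"
  show "(\<lambda>v. f v + g v) \<in> borel_measurable borel" by measurable
  show "\<exists>B. \<forall>v. \<bar>f v + g v\<bar> \<le> B"
  proof (intro exI allI)
    fix v
    have "\<bar>f v + g v\<bar> \<le> \<bar>f v\<bar> + \<bar>g v\<bar>" by (rule abs_triangle_ineq)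
    also have "\<dots> \<le> B1 + B2" using b by (intro add_mono) auto
    finally show "\<bar>f v + g v\<bar> \<le> B1 + B2" .
  qed
qed

lemma BM_mult: "BM f \<Longrightarrow> BM g \<Longrightarrow> BM (\<lambda>v. f v * g v)"
  unfolding BM_def
proof (elim conjE exE, intro conjI)
  fix B1 B2 assume [measurable]: "f \<in> borel_measurable borel" "g \<in> borel_measurable borel"
    and b: "\<forall>v. \<bar>f v\<bar> \<le> B1" "\<forall>v. \<bar>g v\<bar> \<le> B2"
  show "(\<lambda>v. f v * g v) \<in> borel_measurable borel" by measurable
  show "\<exists>B. \<forall>v. \<bar>f v * g v\<bar> \<le> B"
  proof (intro exI allI)
    fix v
    have "\<bar>f v\<bar> * \<bar>g v\<bar> \<le> B1 * B2"
      by (rule mult_mono) (use b in \<open>auto intro: order_trans[OF abs_ge_zero]\<close>)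
    then show "\<bar>f v * g v\<bar> \<le> B1 * B2" by (simp add: abs_mult)
  qed
qed

lemma BM_uminus: "BM f \<Longrightarrow> BM (\<lambda>v. - f v)"
  unfolding BM_def by auto

lemma BM_diff: "BM f \<Longrightarrow> BM g \<Longrightarrow> BM (\<lambda>v. f v - g v)"
  using BM_add[of f "\<lambda>v. - g v"] BM_uminus[of g] by simp

lemma BM_abs: "BM f \<Longrightarrow> BM (\<lambda>v. \<bar>f v\<bar>)"
  unfolding BM_def by auto

lemma BM_powr:
  assumes "BM f" "\<And>v. 0 \<le> f v" "0 < p"
  shows "BM (\<lambda>v. f v powr p)"
proof -
  obtain B where [measurable]: "f \<in> borel_measurable borel" and b: "\<And>v. \<bar>f v\<bar> \<le> B"
    using assms(1) unfolding BM_def by blast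
  show ?thesis
  proof (rule BM_I[where B="B powr p"])
    show "(\<lambda>v. f v powr p) \<in> borel_measurable borel" by measurable
    fix v
    have "f v powr p \<le> B powr p"
      using b[of v] assms(2)[of v] assms(3) by (intro powr_mono2) auto
    then show "\<bar>f v powr p\<bar> \<le> B powr p" by simp
  qed
qed

lemma BM_prod: "finite I \<Longrightarrow> (\<And>i. i \<in> I \<Longrightarrow> BM (g i)) \<Longrightarrow> BM (\<lambda>v. \<Prod>i\<in>I. g i v)"
proof (induction I rule: finite_induct)
  case empty then show ?case by (simp add: BM_const)
next
  case (insert x F) then show ?case by (simp add: BM_mult)
qed

lemma BM_sum: "finite I \<Longrightarrow> (\<And>i. i \<in> I \<Longrightarrow> BM (g i)) \<Longrightarrow> BM (\<lambda>v. \<Sum>i\<in>I. g i v)"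
proof (induction I rule: finite_induct)
  case empty then show ?case by (simp add: BM_const)
next
  case (insert x F) then show ?case by (simp add: BM_add)
qed

lemma BM_shift: "BM f \<Longrightarrow> BM (\<lambda>v. f (v + c))"
  unfolding BM_def
proof (elim conjE exE, intro conjI)
  fix B assume [measurable]: "f \<in> borel_measurable borel" and b: "\<forall>v. \<bar>f v\<bar> \<le> B"
  show "(\<lambda>v. f (v + c)) \<in> borel_measurable borel" by measurable
  show "\<exists>B. \<forall>v. \<bar>f (v + c)\<bar> \<le> B" using b by blast
qed

lemma BM_shift': "BM f \<Longrightarrow> BM (\<lambda>v. f (v - c))"
  using BM_shift[of f "- c"] by simp

lemma BM_aF: "BM (aF L)"
  by (rule BM_I[where B=1]) (auto simp: aF_abs_le)

lemma BM_xF: "L < 1 \<Longrightarrow> BM (xF L)"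
proof (rule BM_I[where B="1 / (1 - L)"])
  fix v assume "L < 1"
  then show "\<bar>xF L v\<bar> \<le> 1 / (1 - L)" using xF_nonneg[of L v] xF_le[of L v] by simp
qed simp

lemma BM_int: "BM g \<Longrightarrow> integrable lborel (\<lambda>t. indicator {0..1} t * g t)"
  unfolding BM_def using integrable_bdd by blast

lemma int01_mono:
  assumes "BM g1" "BM g2" "\<And>t. 0 \<le> t \<Longrightarrow> t \<le> 1 \<Longrightarrow> g1 t \<le> g2 t"
  shows "(LINT t:{0..1}|lborel. g1 t) \<le> (LINT t:{0..1}|lborel. g2 t)"
  unfolding lint_eq_ind
  by (rule integral_mono[OF BM_int[OF assms(1)] BM_int[OF assms(2)]])
     (use assms(3) in \<open>auto simp: indicator_def\<close>)

lemma int01_nonneg: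
  fixes g :: "real \<Rightarrow> real"
  assumes "\<And>t. 0 \<le> t \<Longrightarrow> t \<le> 1 \<Longrightarrow> 0 \<le> g t"
  shows "0 \<le> (LINT t:{0..1}|lborel. g t)"
  unfolding lint_eq_ind
  by (rule integral_nonneg_AE) (use assms in \<open>auto simp: indicator_def\<close>)

lemma int01_add:
  assumes "BM g1" "BM g2"
  shows "(LINT t:{0..1}|lborel. g1 t + g2 t) = (LINT t:{0..1}|lborel. g1 t) + (LINT t:{0..1}|lborel. g2 t)"
proof -
  have "(LINT t:{0..1}|lborel. g1 t + g2 t) = (\<integral>t. indicator {0..1} t * g1 t + indicator {0..1} t * g2 t \<partial>lborel)"
    unfolding lint_eq_ind by (simp add: algebra_simps)
  also have "\<dots> = (\<integral>t. indicator {0..1} t * g1 t \<partial>lborel) + (\<integral>t. indicator {0..1} t * g2 t \<partial>lborel)"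
    using BM_int[OF assms(1)] BM_int[OF assms(2)] by (rule Bochner_Integration.integral_add)
  finally show ?thesis unfolding lint_eq_ind .
qed

lemma int01_cmult:
  fixes g :: "real \<Rightarrow> real"
  shows "(LINT t:{0..1}|lborel. c * g t) = c * (LINT t:{0..1}|lborel. g t)"
  unfolding lint_eq_ind by (simp add: mult.left_commute)

lemma int01_sum:
  assumes "finite I" "\<And>i. i \<in> I \<Longrightarrow> BM (g i)"
  shows "(LINT t:{0..1}|lborel. \<Sum>i\<in>I. g i t) = (\<Sum>i\<in>I. LINT t:{0..1}|lborel. g i t)"
  using assms
proof (induction I rule: finite_induct)
  case empty then show ?case unfolding lint_eq_ind by simp
next
  case (insert x F)
  have "(LINT t:{0..1}|lborel. \<Sum>i\<in>insert x F. g i t) = (LINT t:{0..1}|lborel. g x t + (\<Sum>i\<in>F. g i t))"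
    using insert by simp
  also have "\<dots> = (LINT t:{0..1}|lborel. g x t) + (LINT t:{0..1}|lborel. (\<Sum>i\<in>F. g i t))"
    using insert by (intro int01_add BM_sum) auto
  finally show ?case using insert by simp
qed

lemma holder01:
  fixes f w :: "real \<Rightarrow> real" and p :: real
  assumes f: "BM f" and w: "BM w" and f0: "\<And>v. 0 \<le> f v" and w0: "\<And>v. 0 \<le> w v" and p: "1 \<le> p"
  shows "(LINT t:{0..1}|lborel. f t * w t) powr p
     \<le> (LINT t:{0..1}|lborel. f t powr p * w t) * (LINT t:{0..1}|lborel. w t) powr (p - 1)"
proof -
  define W where "W = (LINT t:{0..1}|lborel. w t)"
  define F where "F = (LINT t:{0..1}|lborel. f t * w t)"
  define G where "G = (LINT t:{0..1}|lborel. f t powr p * w t)"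
  obtain b where fb: "\<And>v. \<bar>f v\<bar> \<le> b" using f unfolding BM_def by blast
  have fw: "BM (\<lambda>t. f t * w t)" by (rule BM_mult[OF f w])
  have fpw: "BM (\<lambda>t. f t powr p * w t)" using p by (intro BM_mult BM_powr f w f0) auto
  have W0: "0 \<le> W" unfolding W_def by (rule int01_nonneg) (use w0 in auto)
  have F0: "0 \<le> F" unfolding F_def by (rule int01_nonneg) (use w0 f0 in auto)
  have G0: "0 \<le> G" unfolding G_def by (rule int01_nonneg) (use w0 f0 in auto)
  show ?thesis
  proof (cases "W = 0")
    case True
    have "F \<le> (LINT t:{0..1}|lborel. b * w t)" unfolding F_def
      by (rule int01_mono[OF fw]) (use fb w0 f0 in \<open>auto intro!: BM_mult BM_const w mult_right_mono simp: abs_le_iff\<close>)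
    also have "\<dots> = 0" using True by (simp add: int01_cmult W_def)
    finally have "F = 0" using F0 by simp
    then show ?thesis using G0 W0 by (simp add: F_def[symmetric] G_def[symmetric] W_def[symmetric])
  next
    case False
    then have Wp: "0 < W" using W0 by simp
    define m where "m = F / W"
    have m0: "0 \<le> m" unfolding m_def using F0 W0 by simp
    define A0 where "A0 = m powr p - p * m powr (p - 1) * m"
    define A1 where "A1 = p * m powr (p - 1)"
    have "(LINT t:{0..1}|lborel. A0 * w t + A1 * (f t * w t)) \<le> G"
      unfolding G_def
    proof (rule int01_mono)
      show "BM (\<lambda>t. A0 * w t + A1 * (f t * w t))" by (intro BM_add BM_mult BM_const w fw)
      show "BM (\<lambda>t. f t powr p * w t)" by (rule fpw)
      fix t
      have "A0 + A1 * f t \<le> f t powr p"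
        using tangent_powr[OF f0[of t] m0 p] unfolding A0_def A1_def by (simp add: algebra_simps)
      then have "(A0 + A1 * f t) * w t \<le> f t powr p * w t"
        using w0[of t] by (rule mult_right_mono)
      then show "A0 * w t + A1 * (f t * w t) \<le> f t powr p * w t" by (simp add: algebra_simps)
    qed
    moreover have "(LINT t:{0..1}|lborel. A0 * w t + A1 * (f t * w t)) = A0 * W + A1 * F"
      unfolding W_def F_def
      by (subst int01_add) (auto intro!: BM_mult BM_const w fw simp: int01_cmult)
    moreover have "A0 * W + A1 * F = m powr p * W"
      unfolding A0_def A1_def using Wp by (simp add: m_def algebra_simps)
    ultimately have mG: "m powr p * W \<le> G" by simp
    have "F powr p = (m * W) powr p" using Wp by (simp add: m_def)
    also have "\<dots> = m powr p * W * W powr (p - 1)"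
      using m0 Wp by (simp add: powr_mult powr_diff)
    also have "\<dots> \<le> G * W powr (p - 1)"
      using mG by (rule mult_right_mono) simp
    finally show ?thesis by (simp add: F_def G_def W_def)
  qed
qed

lemma expect_unif:
  fixes \<psi> :: "real \<Rightarrow> real"
  assumes ps: "prob_space M" and om[measurable]: "om \<in> borel_measurable M"
    and d: "distr M borel om = uniform_measure lborel {0..<1}"
    and f: "BM \<psi>" and per: "\<And>v. \<psi> (v + 1) = \<psi> v"
  shows "prob_space.expectation M (\<lambda>x. \<psi> (y - om x)) = (LINT s:{0..1}|lborel. \<psi> s)"
proof -
  have [measurable]: "\<psi> \<in> borel_measurable borel" using f by (rule BM_meas)
  obtain b where b: "\<And>v. \<bar>\<psi> v\<bar> \<le> b" using f unfolding BM_def by blast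
  have "(\<integral>x. \<psi> (y - om x) \<partial>M) = (\<integral>u. \<psi> (y - u) \<partial>distr M borel om)"
    by (subst integral_distr) auto
  also have "\<dots> = (\<integral>u. \<psi> (y - u) \<partial>density lborel (\<lambda>x. ennreal (indicator {0..<1} x)))"
    unfolding d uniform_measure_def by (simp add: ennreal_indicator divide_ennreal_def)
  also have "\<dots> = (\<integral>u. indicator {0..<1} u *\<^sub>R \<psi> (y - u) \<partial>lborel)"
    by (subst integral_density) auto
  also have "\<dots> = (\<integral>u. indicator {0..1} u * \<psi> (y - u) \<partial>lborel)"
  proof (rule integral_cong_AE)
    show "AE x in lborel. indicator {0..<1} x *\<^sub>R \<psi> (y - x) = indicator {0..1} x * \<psi> (y - x)"
      using AE_lborel_singleton[of 1] by eventually_elim (auto simp: indicator_def)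
  qed measurable
  also have "\<dots> = (LINT s:{0..1}|lborel. \<psi> s)"
    using per_int[of \<psi> b, OF _ b per, of y] by (simp add: lint_eq_ind)
  finally show ?thesis .
qed

lemma G_main:
  fixes \<omega> :: "nat \<Rightarrow> 'a \<Rightarrow> real" and \<psi> :: "nat \<Rightarrow> real \<Rightarrow> real"
  assumes ps: "prob_space M"
    and ind: "prob_space.indep_vars M (\<lambda>_. borel) \<omega> {1..}"
    and unif: "\<forall>k\<ge>1. distr M borel (\<omega> k) = uniform_measure lborel {0..<1}"
    and J: "finite J" "J \<subseteq> {1..}"
    and \<psi>: "\<And>j. j \<in> J \<Longrightarrow> BM (\<psi> j)" and per: "\<And>j v. j \<in> J \<Longrightarrow> \<psi> j (v + 1) = \<psi> j v"
  shows "integrable M (\<lambda>x. LINT t:{0..1}|lborel. \<Prod>j\<in>J. \<psi> j (t - \<omega> j x))"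
    and "prob_space.expectation M (\<lambda>x. LINT t:{0..1}|lborel. \<Prod>j\<in>J. \<psi> j (t - \<omega> j x))
         = (\<Prod>j\<in>J. LINT s:{0..1}|lborel. \<psi> j s)"
proof -
  interpret prob_space M by (rule ps)
  have om_meas: "\<omega> j \<in> borel_measurable M" if "j \<in> J" for j
    using ind J that unfolding indep_vars_def by auto
  have ps_meas: "\<psi> j \<in> borel_measurable borel" if "j \<in> J" for j
    using \<psi>[OF that] by (rule BM_meas)
  have "\<forall>j\<in>J. \<exists>B. \<forall>v. \<bar>\<psi> j v\<bar> \<le> B" using \<psi> unfolding BM_def by blast
  then obtain Bf where Bf: "\<And>j v. j \<in> J \<Longrightarrow> \<bar>\<psi> j v\<bar> \<le> Bf j" by metis
  define PB where "PB = (\<Prod>j\<in>J. Bf j)"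
  have prod_bd: "\<bar>\<Prod>j\<in>J. \<psi> j (z j)\<bar> \<le> PB" for z
    unfolding PB_def abs_prod by (intro prod_mono) (use Bf in auto)
  have PS: "pair_sigma_finite M lborel"
    by (simp add: pair_sigma_finite_def prob_space_imp_sigma_finite ps lborel.sigma_finite_measure_axioms)
  define F where "F = (\<lambda>x t. indicator {0..1} t * (\<Prod>j\<in>J. \<psi> j (t - \<omega> j x)))"
  have Fm: "(\<lambda>(x, t). F x t) \<in> borel_measurable (M \<Otimes>\<^sub>M lborel)"
  proof -
    have "(\<lambda>z. \<psi> j (snd z - \<omega> j (fst z))) \<in> borel_measurable (M \<Otimes>\<^sub>M lborel)" if j: "j \<in> J" for j
    proof -
      note [measurable] = om_meas[OF j] ps_meas[OF j]
      show ?thesis by measurable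
    qed
    then have "(\<lambda>z. \<Prod>j\<in>J. \<psi> j (snd z - \<omega> j (fst z))) \<in> borel_measurable (M \<Otimes>\<^sub>M lborel)"
      by (rule borel_measurable_prod)
    then show ?thesis unfolding F_def split_beta' by measurable
  qed
  have Fi: "integrable (M \<Otimes>\<^sub>M lborel) (\<lambda>(x, t). F x t)"
  proof (rule Bochner_Integration.integrable_bound[OF _ Fm])
    have e: "emeasure (M \<Otimes>\<^sub>M lborel) (space M \<times> {0..(1::real)}) < \<infinity>"
      by (subst lborel.emeasure_pair_measure_Times) (auto simp: emeasure_space_1)
    have "integrable (M \<Otimes>\<^sub>M lborel) (\<lambda>z. PB * indicator (space M \<times> {0..(1::real)}) z)"
      by (intro integrable_mult_right integrable_real_indicator e) auto
    moreover have eq: "\<And>z. z \<in> space (M \<Otimes>\<^sub>M lborel) \<Longrightarrow> PB * indicator (space M \<times> {0..(1::real)}) z = PB * indicator {0..(1::real)} (snd z)"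
      by (auto simp: space_pair_measure indicator_def)
    ultimately show "integrable (M \<Otimes>\<^sub>M lborel) (\<lambda>z. PB * indicator {0..(1::real)} (snd z))"
      by (subst Bochner_Integration.integrable_cong[OF refl, where g="\<lambda>z. PB * indicator (space M \<times> {0..(1::real)}) z"]) (auto simp: space_pair_measure indicator_def)
    show "AE z in M \<Otimes>\<^sub>M lborel. norm ((\<lambda>(x, t). F x t) z) \<le> norm (PB * indicator {0..(1::real)} (snd z))"
    proof (rule always_eventually, rule allI)
      fix z :: "'a \<times> real"
      have "\<bar>F (fst z) (snd z)\<bar> \<le> indicator {0..(1::real)} (snd z) * PB"
        unfolding F_def abs_mult by (intro mult_mono) (auto simp: prod_bd)
      moreover have "0 \<le> PB" using prod_bd[of "\<lambda>_. 0"] by linarith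
      ultimately show "norm ((\<lambda>(x, t). F x t) z) \<le> norm (PB * indicator {0..(1::real)} (snd z))"
        by (auto simp: split_beta' mult.commute)
    qed
  qed
  have "integrable M (\<lambda>x. LINT t|lborel. F x t)"
    using pair_sigma_finite.integrable_fst[OF PS Fi] .
  then show "integrable M (\<lambda>x. LINT t:{0..1}|lborel. \<Prod>j\<in>J. \<psi> j (t - \<omega> j x))"
    by (simp add: F_def lint_eq_ind)
  have inner: "(LINT x|M. F x t) = indicator {0..1} t * (\<Prod>j\<in>J. LINT s:{0..1}|lborel. \<psi> j s)" for t
  proof -
    have indep: "indep_vars (\<lambda>_. borel) (\<lambda>j x. \<psi> j (t - \<omega> j x)) J"
    proof (rule indep_vars_compose2[where X=\<omega>])
      show "indep_vars (\<lambda>_. borel) \<omega> J" using indep_vars_subset[OF ind J(2)] .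
      fix j assume "j \<in> J"
      note [measurable] = ps_meas[OF this]
      show "(\<lambda>u. \<psi> j (t - u)) \<in> borel \<rightarrow>\<^sub>M borel" by measurable
    qed
    have intj: "integrable M (\<lambda>x. \<psi> j (t - \<omega> j x))" if j: "j \<in> J" for j
    proof (rule integrable_const_bound[where B="Bf j"])
      show "AE x in M. norm (\<psi> j (t - \<omega> j x)) \<le> Bf j" using Bf[OF j] by simp
      note [measurable] = om_meas[OF j] ps_meas[OF j]
      show "(\<lambda>x. \<psi> j (t - \<omega> j x)) \<in> borel_measurable M" by measurable
    qed
    have "(LINT x|M. F x t) = indicator {0..1} t * (LINT x|M. (\<Prod>j\<in>J. \<psi> j (t - \<omega> j x)))"
      unfolding F_def by simp
    also have "(LINT x|M. (\<Prod>j\<in>J. \<psi> j (t - \<omega> j x))) = (\<Prod>j\<in>J. LINT x|M. \<psi> j (t - \<omega> j x))"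
      by (rule indep_vars_lebesgue_integral[OF J(1) indep intj])
    also have "\<dots> = (\<Prod>j\<in>J. LINT s:{0..1}|lborel. \<psi> j s)"
    proof (rule prod.cong[OF refl])
      fix j assume j: "j \<in> J"
      then have j1: "j \<ge> 1" using J by auto
      show "(LINT x|M. \<psi> j (t - \<omega> j x)) = (LINT s:{0..1}|lborel. \<psi> j s)"
        by (rule expect_unif[OF ps om_meas[OF j] _ \<psi>[OF j] per[OF j]]) (use unif j1 in auto)
    qed
    finally show ?thesis .
  qed
  have "(\<integral>x. (LINT t:{0..1}|lborel. \<Prod>j\<in>J. \<psi> j (t - \<omega> j x)) \<partial>M) = (\<integral>x. (LINT t|lborel. F x t) \<partial>M)"
    by (simp add: F_def lint_eq_ind)
  also have "\<dots> = (\<integral>t. (LINT x|M. F x t) \<partial>lborel)"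
    using pair_sigma_finite.Fubini_integral[OF PS Fi] by simp
  also have "\<dots> = (LINT t|lborel. indicator {0..1} (t::real) * (\<Prod>j\<in>J. LINT s:{0..1}|lborel. \<psi> j s))"
    by (simp add: inner)
  also have "\<dots> = (\<Prod>j\<in>J. LINT s:{0..1}|lborel. \<psi> j s)" by simp
  finally show "prob_space.expectation M (\<lambda>x. LINT t:{0..1}|lborel. \<Prod>j\<in>J. \<psi> j (t - \<omega> j x))
         = (\<Prod>j\<in>J. LINT s:{0..1}|lborel. \<psi> j s)" .
qed

lemma powr_prod:
  fixes f :: "nat \<Rightarrow> real"
  assumes "finite I" "\<And>i. i \<in> I \<Longrightarrow> 0 \<le> f i"
  shows "(\<Prod>i\<in>I. f i) powr p = (\<Prod>i\<in>I. f i powr p)"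
  using assms
proof (induction I rule: finite_induct)
  case empty then show ?case by simp
next
  case (insert x F)
  then show ?case by (simp add: powr_mult prod_nonneg)
qed

lemma prod_split_last:
  fixes g :: "nat \<Rightarrow> real"
  assumes "1 \<le> k"
  shows "(\<Prod>j\<in>{1..k}. g j) = (\<Prod>j\<in>{1..k-1}. g j) * g k"
proof -
  have e: "{1..k} = insert k {1..k-1}" using assms by auto
  have "k \<notin> {1..k-1}" using assms by auto
  then show ?thesis unfolding e by (simp add: mult.commute)
qed

lemma Mf_eq: "Mf l om n t = (\<Prod>j\<in>{1..n}. xF (l j) (t - om j))"
  by (simp add: Mf_def Xf_xF)

lemma Df_eq:
  assumes "1 \<le> k"
  shows "Df l om k t = Mf l om (k - 1) t * (xF (l k) (t - om k) - (if k = 1 then 0 else 1))"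
proof (cases "k = 1")
  case True then show ?thesis by (simp add: Df_def Mf_eq)
next
  case False
  then show ?thesis using prod_split_last[OF assms, of "\<lambda>j. xF (l j) (t - om j)"]
    by (simp add: Df_def Mf_eq algebra_simps)
qed

definition PsiF :: "(nat \<Rightarrow> real) \<Rightarrow> real \<Rightarrow> real \<Rightarrow> nat \<Rightarrow> real \<Rightarrow> nat \<Rightarrow> (real \<Rightarrow> real) \<Rightarrow> nat \<Rightarrow> real \<Rightarrow> real" where
  "PsiF l p h k \<sigma> j0 lst j v = (if j = k then lst v else
     xF (l j) (v + \<sigma>) powr p * (if j = j0 then \<bar>aF (l j) (v + h) - aF (l j) v\<bar> else 1))"

lemma PsiF_BM:
  assumes "l j < 1" "BM lst" "0 < p"
  shows "BM (PsiF l p h k \<sigma> j0 lst j)"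
proof (cases "j = k")
  case True
  then have "PsiF l p h k \<sigma> j0 lst j = lst" by (simp add: fun_eq_iff PsiF_def)
  then show ?thesis using assms by simp
next
  case False
  have b2: "BM (\<lambda>v. if j = j0 then \<bar>aF (l j) (v + h) - aF (l j) v\<bar> else 1)"
  proof (cases "j = j0")
    case True
    have "BM (\<lambda>v. \<bar>aF (l j) (v + h) - aF (l j) v\<bar>)"
      by (intro BM_abs BM_diff BM_shift BM_aF)
    then show ?thesis using True by simp
  qed (simp add: BM_const)
  have "BM (\<lambda>v. xF (l j) (v + \<sigma>) powr p * (if j = j0 then \<bar>aF (l j) (v + h) - aF (l j) v\<bar> else 1))"
    by (intro BM_mult BM_powr BM_shift BM_xF assms xF_nonneg b2)
  moreover have "PsiF l p h k \<sigma> j0 lst j = (\<lambda>v. xF (l j) (v + \<sigma>) powr p * (if j = j0 then \<bar>aF (l j) (v + h) - aF (l j) v\<bar> else 1))"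
    using False by (simp add: fun_eq_iff PsiF_def)
  ultimately show ?thesis by simp
qed

lemma PsiF_per:
  assumes "\<And>v. lst (v + 1) = lst v"
  shows "PsiF l p h k \<sigma> j0 lst j (v + 1) = PsiF l p h k \<sigma> j0 lst j v"
proof -
  have "\<And>L. xF L (v + 1 + \<sigma>) = xF L (v + \<sigma>)" using xF_per[of _ "v + \<sigma>"] by (simp add: algebra_simps)
  moreover have "\<And>L. aF L (v + 1 + h) = aF L (v + h)" using aF_per[of _ "v + h"] by (simp add: algebra_simps)
  ultimately show ?thesis unfolding PsiF_def using assms aF_per by simp
qed

lemma PsiF_nonneg:
  assumes "l j < 1" "\<And>v. 0 \<le> lst v"
  shows "0 \<le> PsiF l p h k \<sigma> j0 lst j v"
  unfolding PsiF_def using assms by auto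

lemma PsiF_prod:
  assumes "1 \<le> k"
  shows "(\<Prod>j\<in>{1..k}. PsiF l p h k \<sigma> j0 lst j (t - om j))
    = (\<Prod>j\<in>{1..k-1}. xF (l j) (t - om j + \<sigma>) powr p)
      * (if j0 \<in> {1..k-1} then \<bar>aF (l j0) (t - om j0 + h) - aF (l j0) (t - om j0)\<bar> else 1)
      * lst (t - om k)"
proof -
  have "(\<Prod>j\<in>{1..k-1}. PsiF l p h k \<sigma> j0 lst j (t - om j))
      = (\<Prod>j\<in>{1..k-1}. xF (l j) (t - om j + \<sigma>) powr p *
           (if j = j0 then \<bar>aF (l j) (t - om j + h) - aF (l j) (t - om j)\<bar> else 1))"
    by (intro prod.cong refl) (auto simp: PsiF_def)
  also have "\<dots> = (\<Prod>j\<in>{1..k-1}. xF (l j) (t - om j + \<sigma>) powr p) *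
      (\<Prod>j\<in>{1..k-1}. (if j = j0 then \<bar>aF (l j) (t - om j + h) - aF (l j) (t - om j)\<bar> else 1))"
    by (rule prod.distrib)
  also have "(\<Prod>j\<in>{1..k-1}. (if j = j0 then \<bar>aF (l j) (t - om j + h) - aF (l j) (t - om j)\<bar> else 1))
      = (if j0 \<in> {1..k-1} then \<bar>aF (l j0) (t - om j0 + h) - aF (l j0) (t - om j0)\<bar> else 1)"
    by (rule prod.delta[OF finite_atLeastAtMost])
  finally show ?thesis using prod_split_last[OF assms] by (simp add: PsiF_def)
qed

lemma xF_powr_le:
  assumes "0 < L" "L < 1" "0 < p"
  shows "xF L v powr p \<le> (1 - L) powr (- p)"
  using xF_powr[OF assms, of v] aF_01[of L v] by auto

lemma PsiF_int_j:
  assumes L: "0 < l j" "l j < 1" and KK: "1 / (1 - l j) \<le> K" and p: "1 < p" and h: "0 < h" and jk: "j \<noteq> k"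
  shows "(LINT s:{0..1}|lborel. PsiF l p h k \<sigma> j0 lst j s) \<le> (1 - l j) powr (1 - p) * (if j = j0 then 2 * h * K else 1)"
proof (cases "j = j0")
  case False
  have "(LINT s:{0..1}|lborel. PsiF l p h k \<sigma> j0 lst j s) = (LINT s:{0..1}|lborel. xF (l j) (s + \<sigma>) powr p)"
    using False jk by (simp add: PsiF_def)
  also have "\<dots> = (LINT s:{0..1}|lborel. xF (l j) s powr p)"
  proof (rule per_int3)
    show "(\<lambda>v. xF (l j) v powr p) \<in> borel_measurable borel" using L by (intro BM_meas BM_powr BM_xF xF_nonneg) (use p in auto)
    show "\<bar>xF (l j) v powr p\<bar> \<le> (1 - l j) powr (- p)" for v using xF_powr_le[of "l j" p v] L p by simp
    show "xF (l j) (v + 1) powr p = xF (l j) v powr p" for v by (simp add: xF_per)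
  qed
  also have "\<dots> = (1 - l j) powr (1 - p)" using L p by (intro int_xF_powr) auto
  finally show ?thesis using False by simp
next
  case True
  have BMd: "BM (\<lambda>s. \<bar>aF (l j) (s + h) - aF (l j) s\<bar>)" by (intro BM_abs BM_diff BM_shift BM_aF)
  have "(LINT s:{0..1}|lborel. PsiF l p h k \<sigma> j0 lst j s)
      = (LINT s:{0..1}|lborel. xF (l j) (s + \<sigma>) powr p * \<bar>aF (l j) (s + h) - aF (l j) s\<bar>)"
    using True jk by (simp add: PsiF_def)
  also have "\<dots> \<le> (LINT s:{0..1}|lborel. (1 - l j) powr (- p) * \<bar>aF (l j) (s + h) - aF (l j) s\<bar>)"
  proof (rule int01_mono)
    show "BM (\<lambda>s. xF (l j) (s + \<sigma>) powr p * \<bar>aF (l j) (s + h) - aF (l j) s\<bar>)"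
      using L p by (intro BM_mult BMd BM_powr BM_shift BM_xF xF_nonneg) auto
    show "BM (\<lambda>s. (1 - l j) powr (- p) * \<bar>aF (l j) (s + h) - aF (l j) s\<bar>)"
      by (intro BM_mult BMd BM_const)
    fix t show "xF (l j) (t + \<sigma>) powr p * \<bar>aF (l j) (t + h) - aF (l j) t\<bar> \<le> (1 - l j) powr (- p) * \<bar>aF (l j) (t + h) - aF (l j) t\<bar>"
      using xF_powr_le[of "l j" p "t + \<sigma>"] L p by (intro mult_right_mono) auto
  qed
  also have "\<dots> = (1 - l j) powr (- p) * (LINT s:{0..1}|lborel. \<bar>aF (l j) (s + h) - aF (l j) s\<bar>)"
    by (rule int01_cmult)
  also have "\<dots> \<le> (1 - l j) powr (- p) * (2 * h)"
    using int_daF[OF h L] by (intro mult_left_mono) auto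
  also have "(1 - l j) powr (- p) = (1 - l j) powr (1 - p) * (1 / (1 - l j))"
    using L by (simp add: powr_diff powr_minus divide_inverse)
  also have "(1 - l j) powr (1 - p) * (1 / (1 - l j)) * (2 * h) \<le> (1 - l j) powr (1 - p) * K * (2 * h)"
    using KK h by (intro mult_right_mono mult_left_mono) auto
  finally show ?thesis using True by (simp add: algebra_simps)
qed

lemma PsiF_int_bound:
  assumes lb: "\<And>j. 1 \<le> j \<Longrightarrow> 0 < l j \<and> l j < 1" and KK: "\<And>j. 1 \<le> j \<Longrightarrow> 1 / (1 - l j) \<le> K"
    and k: "1 \<le> k" and p: "1 < p" and h: "0 < h"
    and lst: "\<And>v. 0 \<le> lst v" and Lb: "(LINT s:{0..1}|lborel. lst s) \<le> Lb"
  shows "(\<Prod>j\<in>{1..k}. LINT s:{0..1}|lborel. PsiF l p h k \<sigma> j0 lst j s)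
     \<le> (\<Prod>j\<in>{1..k-1}. (1 - l j) powr (1 - p)) * (if j0 \<in> {1..k-1} then 2 * h * K else 1) * Lb"
proof -
  have "(\<Prod>j\<in>{1..k-1}. LINT s:{0..1}|lborel. PsiF l p h k \<sigma> j0 lst j s)
      \<le> (\<Prod>j\<in>{1..k-1}. (1 - l j) powr (1 - p) * (if j = j0 then 2 * h * K else 1))"
  proof (rule prod_mono)
    fix j assume j: "j \<in> {1..k-1}"
    then have L: "0 < l j" "l j < 1" using lb by auto
    show "0 \<le> (LINT s:{0..1}|lborel. PsiF l p h k \<sigma> j0 lst j s) \<and>
          (LINT s:{0..1}|lborel. PsiF l p h k \<sigma> j0 lst j s) \<le> (1 - l j) powr (1 - p) * (if j = j0 then 2 * h * K else 1)"
    proof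
      show "0 \<le> (LINT s:{0..1}|lborel. PsiF l p h k \<sigma> j0 lst j s)"
        by (rule int01_nonneg) (use L lst in \<open>auto intro: PsiF_nonneg\<close>)
      show "(LINT s:{0..1}|lborel. PsiF l p h k \<sigma> j0 lst j s) \<le> (1 - l j) powr (1 - p) * (if j = j0 then 2 * h * K else 1)"
        by (rule PsiF_int_j) (use L KK j p h in auto)
    qed
  qed
  also have "\<dots> = (\<Prod>j\<in>{1..k-1}. (1 - l j) powr (1 - p)) * (if j0 \<in> {1..k-1} then 2 * h * K else 1)"
    by (simp add: prod.distrib prod.delta)
  finally have A: "(\<Prod>j\<in>{1..k-1}. LINT s:{0..1}|lborel. PsiF l p h k \<sigma> j0 lst j s)
      \<le> (\<Prod>j\<in>{1..k-1}. (1 - l j) powr (1 - p)) * (if j0 \<in> {1..k-1} then 2 * h * K else 1)" .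
  have Ik: "(LINT s:{0..1}|lborel. PsiF l p h k \<sigma> j0 lst k s) = (LINT s:{0..1}|lborel. lst s)"
    by (simp add: PsiF_def)
  have nn: "0 \<le> (\<Prod>j\<in>{1..k-1}. LINT s:{0..1}|lborel. PsiF l p h k \<sigma> j0 lst j s)"
    by (intro prod_nonneg int01_nonneg PsiF_nonneg) (use lb lst in auto)
  have nI: "0 \<le> (LINT s:{0..1}|lborel. lst s)" by (rule int01_nonneg) (use lst in auto)
  have "(\<Prod>j\<in>{1..k}. LINT s:{0..1}|lborel. PsiF l p h k \<sigma> j0 lst j s)
     = (\<Prod>j\<in>{1..k-1}. LINT s:{0..1}|lborel. PsiF l p h k \<sigma> j0 lst j s) * (LINT s:{0..1}|lborel. lst s)"
    using prod_split_last[OF k] Ik by simp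
  also have "\<dots> \<le> ((\<Prod>j\<in>{1..k-1}. (1 - l j) powr (1 - p)) * (if j0 \<in> {1..k-1} then 2 * h * K else 1)) * Lb"
  proof (rule mult_mono[OF A Lb])
    have "0 < 1 / (1 - l 1)" using lb[of 1] by simp
    then have K0: "0 \<le> K" using KK[of 1] by linarith
    have "0 \<le> (\<Prod>j\<in>{1..k-1}. (1 - l j) powr (1 - p))" by (intro prod_nonneg) auto
    then show "0 \<le> (\<Prod>j\<in>{1..k-1}. (1 - l j) powr (1 - p)) * (if j0 \<in> {1..k-1} then 2 * h * K else 1)"
      using K0 h by auto
  qed (use nI in auto)
  finally show ?thesis .
qed

lemma BM_X: "l j < 1 \<Longrightarrow> BM (\<lambda>t. xF (l j) (t - c))"
  by (intro BM_shift' BM_xF)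

lemma BM_Xs: "l j < 1 \<Longrightarrow> BM (\<lambda>t. xF (l j) (t - c + \<sigma>))"
proof -
  assume "l j < 1"
  then have "BM (\<lambda>t. xF (l j) (t + (\<sigma> - c)))" by (intro BM_shift BM_xF)
  moreover have "(\<lambda>t. xF (l j) (t + (\<sigma> - c))) = (\<lambda>t. xF (l j) (t - c + \<sigma>))"
    by (simp add: algebra_simps)
  ultimately show ?thesis by simp
qed

lemma BM_N: "(\<And>j. j \<in> I \<Longrightarrow> l j < 1) \<Longrightarrow> finite I \<Longrightarrow> BM (\<lambda>t. \<Prod>j\<in>I. xF (l j) (t - om j + \<sigma>))"
  by (intro BM_prod BM_Xs) auto

lemma int_Y:
  assumes "L < 1"
  shows "(LINT t:{0..1}|lborel. \<bar>xF L (t - c) - d\<bar>) = (LINT s:{0..1}|lborel. \<bar>xF L s - d\<bar>)"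
proof (rule per_int2)
  have "BM (\<lambda>s. \<bar>xF L s - d\<bar>)" using assms by (intro BM_abs BM_diff BM_xF BM_const)
  then show "(\<lambda>s. \<bar>xF L s - d\<bar>) \<in> borel_measurable borel" by (rule BM_meas)
  show "\<bar>\<bar>xF L v - d\<bar>\<bar> \<le> 1 / (1 - L) + \<bar>d\<bar>" for v
    using xF_nonneg[of "L" v] xF_le[of "L" v] assms by auto
  show "\<bar>xF L (v + 1) - d\<bar> = \<bar>xF L v - d\<bar>" for v by (simp add: xF_per)
qed

lemma det_ii:
  assumes lb: "\<And>j. 1 \<le> j \<Longrightarrow> 0 < l j \<and> l j < 1" and k: "1 \<le> k" and p: "1 < p"
    and Bk: "(LINT s:{0..1}|lborel. \<bar>xF (l k) s - (if k = 1 then 0 else 1)\<bar>) \<le> Bk"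
  shows "(LINT t:{0..1}|lborel. \<bar>Df l om k t\<bar>) powr p
    \<le> Bk powr (p - 1) * (LINT t:{0..1}|lborel. \<Prod>j\<in>{1..k}. PsiF l p 1 k 0 0 (\<lambda>v. \<bar>xF (l k) v - (if k = 1 then 0 else 1)\<bar>) j (t - om j))"
proof -
  define c :: real where "c = (if k = 1 then 0 else 1)"
  define N where "N t = (\<Prod>j\<in>{1..k-1}. xF (l j) (t - om j + 0))" for t
  define Y where "Y t = \<bar>xF (l k) (t - om k) - c\<bar>" for t
  have lk: "l k < 1" using lb k by auto
  have N0: "0 \<le> N t" for t unfolding N_def by (intro prod_nonneg xF_nonneg) (use lb in auto)
  have Y0: "0 \<le> Y t" for t unfolding Y_def by simp
  have BN: "BM N" unfolding N_def by (intro BM_N) (use lb in auto)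
  have BY: "BM Y" unfolding Y_def using lk by (intro BM_abs BM_diff BM_X BM_const)
  have D: "\<bar>Df l om k t\<bar> = N t * Y t" for t
    using Df_eq[OF k, of l om t] N0[of t] by (simp add: N_def Y_def c_def Mf_eq abs_mult)
  have "(LINT t:{0..1}|lborel. \<bar>Df l om k t\<bar>) powr p = (LINT t:{0..1}|lborel. N t * Y t) powr p"
    by (simp add: D)
  also have "\<dots> \<le> (LINT t:{0..1}|lborel. N t powr p * Y t) * (LINT t:{0..1}|lborel. Y t) powr (p - 1)"
    by (rule holder01[OF BN BY N0 Y0]) (use p in auto)
  also have "\<dots> \<le> (LINT t:{0..1}|lborel. N t powr p * Y t) * Bk powr (p - 1)"
  proof (rule mult_left_mono)
    have "(LINT t:{0..1}|lborel. Y t) = (LINT s:{0..1}|lborel. \<bar>xF (l k) s - c\<bar>)"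
      unfolding Y_def by (rule int_Y[OF lk])
    then have "(LINT t:{0..1}|lborel. Y t) \<le> Bk" using Bk by (simp add: c_def)
    moreover have "0 \<le> (LINT t:{0..1}|lborel. Y t)" by (rule int01_nonneg) (simp add: Y0)
    ultimately show "(LINT t:{0..1}|lborel. Y t) powr (p - 1) \<le> Bk powr (p - 1)"
      by (intro powr_mono2) (use p in auto)
    show "0 \<le> (LINT t:{0..1}|lborel. N t powr p * Y t)"
      by (rule int01_nonneg) (simp add: Y0)
  qed
  also have "(LINT t:{0..1}|lborel. N t powr p * Y t)
      = (LINT t:{0..1}|lborel. \<Prod>j\<in>{1..k}. PsiF l p 1 k 0 0 (\<lambda>v. \<bar>xF (l k) v - (if k = 1 then 0 else 1)\<bar>) j (t - om j))"
  proof -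
    have "N t powr p * Y t = (\<Prod>j\<in>{1..k}. PsiF l p 1 k 0 0 (\<lambda>v. \<bar>xF (l k) v - (if k = 1 then 0 else 1)\<bar>) j (t - om j))" for t
      unfolding PsiF_prod[OF k] N_def Y_def c_def
      by (subst powr_prod) (auto intro!: xF_nonneg simp: lb)
    then show ?thesis by simp
  qed
  finally show ?thesis by (simp add: mult.commute)
qed

lemma max_powr_le:
  fixes a b p :: real
  assumes "0 \<le> a" "0 \<le> b"
  shows "max a b powr p \<le> a powr p + b powr p"
proof (cases "a \<le> b")
  case True then show ?thesis by (simp add: max_def)
next
  case False then show ?thesis by (simp add: max_def)
qed

lemma dN:
  fixes u :: "nat \<Rightarrow> real"
  assumes I: "finite I" and L: "\<And>j. j \<in> I \<Longrightarrow> l j < 1" and p: "0 < p"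
  shows "\<bar>(\<Prod>j\<in>I. xF (l j) (u j + h)) - (\<Prod>j\<in>I. xF (l j) (u j + 0))\<bar> powr p
    \<le> ((\<Prod>j\<in>I. xF (l j) (u j + h)) powr p + (\<Prod>j\<in>I. xF (l j) (u j + 0)) powr p)
       * (\<Sum>j\<in>I. \<bar>aF (l j) (u j + h) - aF (l j) (u j)\<bar>)"
proof -
  define N1 where "N1 = (\<Prod>j\<in>I. xF (l j) (u j + h))"
  define N0 where "N0 = (\<Prod>j\<in>I. xF (l j) (u j + 0))"
  define S where "S = (\<Sum>j\<in>I. \<bar>aF (l j) (u j + h) - aF (l j) (u j)\<bar>)"
  have N10: "0 \<le> N1" "0 \<le> N0" unfolding N1_def N0_def by (auto intro!: prod_nonneg xF_nonneg L)
  have S0: "0 \<le> S" unfolding S_def by (auto intro!: sum_nonneg)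
  have R0: "0 \<le> (N1 powr p + N0 powr p) * S" using S0 by simp
  show ?thesis
  proof (cases "\<forall>j\<in>I. aF (l j) (u j + h) = aF (l j) (u j)")
    case True
    then have "N1 = N0" unfolding N1_def N0_def by (intro prod.cong refl) (simp add: xF_def)
    then show ?thesis unfolding N1_def[symmetric] N0_def[symmetric] S_def[symmetric] using R0 by simp
  next
    case False
    then obtain j0 where j0: "j0 \<in> I" "aF (l j0) (u j0 + h) \<noteq> aF (l j0) (u j0)" by blast
    then have "\<bar>aF (l j0) (u j0 + h) - aF (l j0) (u j0)\<bar> = 1"
      using aF_01[of "l j0" "u j0 + h"] aF_01[of "l j0" "u j0"] by auto
    moreover have "\<bar>aF (l j0) (u j0 + h) - aF (l j0) (u j0)\<bar> \<le> S"
      unfolding S_def by (rule member_le_sum[OF j0(1) _ I]) auto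
    ultimately have S1: "1 \<le> S" by simp
    have "\<bar>N1 - N0\<bar> \<le> max N1 N0" using N10 by auto
    then have "\<bar>N1 - N0\<bar> powr p \<le> max N1 N0 powr p" using p by (intro powr_mono2) auto
    also have "\<dots> \<le> N1 powr p + N0 powr p" by (rule max_powr_le[OF N10])
    also have "\<dots> \<le> (N1 powr p + N0 powr p) * S"
      using S1 mult_left_mono[OF S1, of "N1 powr p + N0 powr p"] by simp
    finally show ?thesis unfolding N1_def[symmetric] N0_def[symmetric] S_def[symmetric] .
  qed
qed

lemma det_i:
  assumes lb: "\<And>j. 1 \<le> j \<Longrightarrow> 0 < l j \<and> l j < 1" and k: "1 \<le> k" and p: "1 < p" and h: "0 < h"
    and Bk: "(LINT s:{0..1}|lborel. \<bar>xF (l k) s - (if k = 1 then 0 else 1)\<bar>) \<le> Bk"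
    and Vb: "(LINT s:{0..1}|lborel. \<bar>xF (l k) (s + h) - xF (l k) s\<bar>) \<le> Vb"
  shows "(LINT t:{0..1}|lborel. \<bar>Df l om k (t + h) - Df l om k t\<bar>) powr p
    \<le> 2 powr p * (Vb powr (p - 1) *
          (LINT t:{0..1}|lborel. \<Prod>j\<in>{1..k}. PsiF l p h k h 0 (\<lambda>v. \<bar>xF (l k) (v + h) - xF (l k) v\<bar>) j (t - om j))
        + Bk powr (p - 1) * (\<Sum>j0\<in>{1..k-1}.
          (LINT t:{0..1}|lborel. \<Prod>j\<in>{1..k}. PsiF l p h k h j0 (\<lambda>v. \<bar>xF (l k) v - (if k = 1 then 0 else 1)\<bar>) j (t - om j))
        + (LINT t:{0..1}|lborel. \<Prod>j\<in>{1..k}. PsiF l p h k 0 j0 (\<lambda>v. \<bar>xF (l k) v - (if k = 1 then 0 else 1)\<bar>) j (t - om j))))"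
proof -
  define c :: real where "c = (if k = 1 then 0 else 1)"
  define lastY where "lastY = (\<lambda>v. \<bar>xF (l k) v - c\<bar>)"
  define lastV where "lastV = (\<lambda>v. \<bar>xF (l k) (v + h) - xF (l k) v\<bar>)"
  define N where "N \<sigma> t = (\<Prod>j\<in>{1..k-1}. xF (l j) (t - om j + \<sigma>))" for \<sigma> t
  define X where "X \<sigma> t = xF (l k) (t - om k + \<sigma>)" for \<sigma> t
  define V where "V t = \<bar>X h t - X 0 t\<bar>" for t
  define Y where "Y t = \<bar>X 0 t - c\<bar>" for t
  define d where "d j t = \<bar>aF (l j) (t - om j + h) - aF (l j) (t - om j)\<bar>" for j t
  define PB where "PB \<sigma> j0 t = (\<Prod>j\<in>{1..k}. PsiF l p h k \<sigma> j0 lastY j (t - om j))" for \<sigma> j0 t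
  define PA where "PA t = (\<Prod>j\<in>{1..k}. PsiF l p h k h 0 lastV j (t - om j))" for t
  have lk: "l k < 1" using lb k by auto
  have lj: "\<And>j. j \<in> {1..k-1} \<Longrightarrow> l j < 1" using lb by auto
  have N0: "0 \<le> N \<sigma> t" for \<sigma> t unfolding N_def by (intro prod_nonneg xF_nonneg) (use lb in auto)
  have V0: "0 \<le> V t" for t by (simp add: V_def)
  have Y0: "0 \<le> Y t" for t by (simp add: Y_def)
  have BN: "BM (N \<sigma>)" for \<sigma> unfolding N_def by (intro BM_N lj) auto
  have BX: "BM (X \<sigma>)" for \<sigma> unfolding X_def by (intro BM_Xs lk)
  have BV: "BM V" unfolding V_def by (intro BM_abs BM_diff BX)
  have BY: "BM Y" unfolding Y_def by (intro BM_abs BM_diff BX BM_const)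
  have BdN: "BM (\<lambda>t. \<bar>N h t - N 0 t\<bar>)" by (intro BM_abs BM_diff BN)
  have Dh: "Df l om k (t + h) = N h t * (X h t - c)" for t
  proof -
    have e: "\<And>j. xF (l j) (t + h - om j) = xF (l j) (t - om j + h)" by (simp add: algebra_simps)
    show ?thesis using Df_eq[OF k, of l om "t + h"] by (simp add: e N_def X_def c_def Mf_eq)
  qed
  have D0: "Df l om k t = N 0 t * (X 0 t - c)" for t
    using Df_eq[OF k, of l om t] by (simp add: N_def X_def c_def Mf_eq)
  have ptw: "\<bar>Df l om k (t + h) - Df l om k t\<bar> \<le> N h t * V t + \<bar>N h t - N 0 t\<bar> * Y t" for t
  proof -
    have "Df l om k (t + h) - Df l om k t = N h t * (X h t - X 0 t) + (N h t - N 0 t) * (X 0 t - c)"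
      unfolding Dh[of t] D0[of t] by (simp add: algebra_simps)
    also have "\<bar>\<dots>\<bar> \<le> \<bar>N h t * (X h t - X 0 t)\<bar> + \<bar>(N h t - N 0 t) * (X 0 t - c)\<bar>"
      by (rule abs_triangle_ineq)
    finally show ?thesis using N0[of h t] by (simp add: abs_mult V_def Y_def)
  qed
  define A where "A = (LINT t:{0..1}|lborel. N h t * V t)"
  define B where "B = (LINT t:{0..1}|lborel. \<bar>N h t - N 0 t\<bar> * Y t)"
  define S where "S = (LINT t:{0..1}|lborel. \<bar>Df l om k (t + h) - Df l om k t\<bar>)"
  have A0: "0 \<le> A" unfolding A_def by (rule int01_nonneg) (simp add: N0 V0)
  have B0: "0 \<le> B" unfolding B_def by (rule int01_nonneg) (simp add: Y0)
  have S0: "0 \<le> S" unfolding S_def by (rule int01_nonneg) simp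
  have eqD: "\<bar>Df l om k (t + h) - Df l om k t\<bar> = \<bar>N h t * (X h t - c) - N 0 t * (X 0 t - c)\<bar>" for t
    by (simp only: Dh[of t] D0[of t])
  have BD: "BM (\<lambda>t. \<bar>Df l om k (t + h) - Df l om k t\<bar>)"
    unfolding eqD by (intro BM_abs BM_diff BM_mult BN BX BM_const)
  have "S \<le> (LINT t:{0..1}|lborel. N h t * V t + \<bar>N h t - N 0 t\<bar> * Y t)"
    unfolding S_def by (rule int01_mono[OF BD]) (auto intro!: BM_add BM_mult BN BV BY BdN ptw)
  also have "\<dots> = A + B" unfolding A_def B_def
    by (rule int01_add) (auto intro!: BM_mult BN BV BY BdN)
  finally have SAB: "S \<le> A + B" .
  have "S powr p \<le> (A + B) powr p" using SAB S0 p by (intro powr_mono2) auto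
  also have "\<dots> \<le> 2 powr p * (A powr p + B powr p)" using A0 B0 p by (intro sum_powr_le) auto
  finally have SP: "S powr p \<le> 2 powr p * (A powr p + B powr p)" .
  have intV: "(LINT t:{0..1}|lborel. V t) \<le> Vb"
  proof -
    have "(LINT t:{0..1}|lborel. V t) = (LINT t:{0..1}|lborel. lastV (t - om k))"
      by (simp add: V_def X_def lastV_def)
    also have "\<dots> = (LINT s:{0..1}|lborel. lastV s)"
    proof (rule per_int2)
      have "BM lastV" unfolding lastV_def using lk by (intro BM_abs BM_diff BM_shift BM_xF)
      then show "lastV \<in> borel_measurable borel" by (rule BM_meas)
      show "\<bar>lastV v\<bar> \<le> 1 / (1 - l k)" for v
      proof -
        have "0 \<le> xF (l k) (v + h)" "xF (l k) (v + h) \<le> 1 / (1 - l k)" "0 \<le> xF (l k) v" "xF (l k) v \<le> 1 / (1 - l k)"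
          using xF_nonneg[of "l k"] xF_le[of "l k"] lk by auto
        then show ?thesis unfolding lastV_def abs_abs abs_le_iff by linarith
      qed
      show "lastV (v + 1) = lastV v" for v
      proof -
        have "xF (l k) (v + 1 + h) = xF (l k) (v + h)" using xF_per[of "l k" "v + h"] by (simp add: algebra_simps)
        then show ?thesis unfolding lastV_def by (simp add: xF_per)
      qed
    qed
    finally show ?thesis using Vb by (simp add: lastV_def)
  qed
  have "A powr p \<le> (LINT t:{0..1}|lborel. N h t powr p * V t) * (LINT t:{0..1}|lborel. V t) powr (p - 1)"
    unfolding A_def by (rule holder01[OF BN BV N0 V0]) (use p in auto)
  also have "\<dots> \<le> (LINT t:{0..1}|lborel. N h t powr p * V t) * Vb powr (p - 1)"
  proof (rule mult_left_mono)
    have "0 \<le> (LINT t:{0..1}|lborel. V t)" by (rule int01_nonneg) (simp add: V0)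
    then show "(LINT t:{0..1}|lborel. V t) powr (p - 1) \<le> Vb powr (p - 1)"
      using intV p by (intro powr_mono2) auto
    show "0 \<le> (LINT t:{0..1}|lborel. N h t powr p * V t)" by (rule int01_nonneg) (simp add: V0)
  qed
  also have "(LINT t:{0..1}|lborel. N h t powr p * V t) = (LINT t:{0..1}|lborel. PA t)"
  proof -
    have "N h t powr p * V t = PA t" for t
      unfolding PA_def PsiF_prod[OF k] N_def V_def X_def lastV_def
      by (subst powr_prod) (auto intro!: xF_nonneg simp: lb)
    then show ?thesis by simp
  qed
  finally have AP: "A powr p \<le> (LINT t:{0..1}|lborel. PA t) * Vb powr (p - 1)" .
  have intY: "(LINT t:{0..1}|lborel. Y t) \<le> Bk"
  proof -
    have "(LINT t:{0..1}|lborel. Y t) = (LINT s:{0..1}|lborel. \<bar>xF (l k) s - c\<bar>)"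
      unfolding Y_def X_def using int_Y[OF lk, of "om k" c] by simp
    then show ?thesis using Bk by (simp add: c_def)
  qed
  have BPB: "BM (PB \<sigma> j0)" for \<sigma> j0
  proof -
    have "BM lastY" unfolding lastY_def using lk by (intro BM_abs BM_diff BM_xF BM_const)
    then have "BM (PsiF l p h k \<sigma> j0 lastY j)" if "j \<in> {1..k}" for j
      using that lb p by (intro PsiF_BM) auto
    then have "BM (\<lambda>t. PsiF l p h k \<sigma> j0 lastY j (t - om j))" if "j \<in> {1..k}" for j
      using that by (intro BM_shift') auto
    then show ?thesis unfolding PB_def by (intro BM_prod) auto
  qed
  have ptwB: "\<bar>N h t - N 0 t\<bar> powr p * Y t \<le> (\<Sum>j0\<in>{1..k-1}. PB h j0 t + PB 0 j0 t)" for t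
  proof -
    have "\<bar>N h t - N 0 t\<bar> powr p \<le> (N h t powr p + N 0 t powr p) * (\<Sum>j\<in>{1..k-1}. d j t)"
      unfolding N_def d_def using dN[of "{1..k-1}" l p "\<lambda>j. t - om j" h] lj p by simp
    then have "\<bar>N h t - N 0 t\<bar> powr p * Y t \<le> (N h t powr p + N 0 t powr p) * (\<Sum>j\<in>{1..k-1}. d j t) * Y t"
      using Y0[of t] by (rule mult_right_mono)
    also have "\<dots> = (\<Sum>j0\<in>{1..k-1}. N h t powr p * d j0 t * Y t + N 0 t powr p * d j0 t * Y t)"
      by (simp add: sum_distrib_left sum_distrib_right algebra_simps sum.distrib)
    also have "\<dots> = (\<Sum>j0\<in>{1..k-1}. PB h j0 t + PB 0 j0 t)"
    proof (rule sum.cong[OF refl])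
      fix j0 assume j0: "j0 \<in> {1..k-1}"
      have "N \<sigma> t powr p * d j0 t * Y t = PB \<sigma> j0 t" for \<sigma>
        unfolding PB_def PsiF_prod[OF k] N_def d_def Y_def X_def lastY_def using j0
        by (subst powr_prod) (auto intro!: xF_nonneg simp: lb)
      then show "N h t powr p * d j0 t * Y t + N 0 t powr p * d j0 t * Y t = PB h j0 t + PB 0 j0 t" by simp
    qed
    finally show ?thesis .
  qed
  have "B powr p \<le> (LINT t:{0..1}|lborel. \<bar>N h t - N 0 t\<bar> powr p * Y t) * (LINT t:{0..1}|lborel. Y t) powr (p - 1)"
    unfolding B_def by (rule holder01[OF BdN BY _ Y0]) (use p in auto)
  also have "\<dots> \<le> (LINT t:{0..1}|lborel. \<bar>N h t - N 0 t\<bar> powr p * Y t) * Bk powr (p - 1)"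
  proof (rule mult_left_mono)
    have "0 \<le> (LINT t:{0..1}|lborel. Y t)" by (rule int01_nonneg) (simp add: Y0)
    then show "(LINT t:{0..1}|lborel. Y t) powr (p - 1) \<le> Bk powr (p - 1)"
      using intY p by (intro powr_mono2) auto
    show "0 \<le> (LINT t:{0..1}|lborel. \<bar>N h t - N 0 t\<bar> powr p * Y t)" by (rule int01_nonneg) (simp add: Y0)
  qed
  also have "(LINT t:{0..1}|lborel. \<bar>N h t - N 0 t\<bar> powr p * Y t) \<le> (LINT t:{0..1}|lborel. \<Sum>j0\<in>{1..k-1}. PB h j0 t + PB 0 j0 t)"
  proof (rule int01_mono)
    show "BM (\<lambda>t. \<bar>N h t - N 0 t\<bar> powr p * Y t)" using p by (intro BM_mult BM_powr BdN BY) auto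
    show "BM (\<lambda>t. \<Sum>j0\<in>{1..k-1}. PB h j0 t + PB 0 j0 t)" by (intro BM_sum BM_add BPB) auto
    show "\<And>t. 0 \<le> t \<Longrightarrow> t \<le> 1 \<Longrightarrow> \<bar>N h t - N 0 t\<bar> powr p * Y t \<le> (\<Sum>j0\<in>{1..k-1}. PB h j0 t + PB 0 j0 t)"
      by (rule ptwB)
  qed
  also have "\<dots> = (\<Sum>j0\<in>{1..k-1}. (LINT t:{0..1}|lborel. PB h j0 t) + (LINT t:{0..1}|lborel. PB 0 j0 t))"
  proof (subst int01_sum)
    show "finite {1..k-1}" by simp
    show "\<And>i. i \<in> {1..k-1} \<Longrightarrow> BM (\<lambda>t. PB h i t + PB 0 i t)" by (intro BM_add BPB)
    show "(\<Sum>i\<in>{1..k-1}. LINT t:{0..1}|lborel. PB h i t + PB 0 i t) =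
      (\<Sum>j0\<in>{1..k-1}. (LINT t:{0..1}|lborel. PB h j0 t) + (LINT t:{0..1}|lborel. PB 0 j0 t))"
      by (intro sum.cong refl int01_add BPB)
  qed
  finally have BP: "B powr p \<le> (\<Sum>j0\<in>{1..k-1}. (LINT t:{0..1}|lborel. PB h j0 t) + (LINT t:{0..1}|lborel. PB 0 j0 t)) * Bk powr (p - 1)"
    by (simp add: mult_right_mono)
  have "S powr p \<le> 2 powr p * ((LINT t:{0..1}|lborel. PA t) * Vb powr (p - 1)
      + (\<Sum>j0\<in>{1..k-1}. (LINT t:{0..1}|lborel. PB h j0 t) + (LINT t:{0..1}|lborel. PB 0 j0 t)) * Bk powr (p - 1))"
    using SP AP BP by (smt (verit) mult_left_mono powr_ge_zero)
  then show ?thesis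
    by (simp add: S_def PA_def PB_def lastV_def lastY_def c_def mult.commute)
qed

lemma E_Psi:
  fixes \<omega> :: "nat \<Rightarrow> 'a \<Rightarrow> real"
  assumes ps: "prob_space M"
    and ind: "prob_space.indep_vars M (\<lambda>_. borel) \<omega> {1..}"
    and unif: "\<forall>k\<ge>1. distr M borel (\<omega> k) = uniform_measure lborel {0..<1}"
    and lb: "\<And>j. 1 \<le> j \<Longrightarrow> 0 < l j \<and> l j < 1" and KK: "\<And>j. 1 \<le> j \<Longrightarrow> 1 / (1 - l j) \<le> K"
    and k: "1 \<le> k" and p: "1 < p" and h: "0 < h"
    and lst: "BM lst" "\<And>v. 0 \<le> lst v" "\<And>v. lst (v + 1) = lst v" and Lb: "(LINT s:{0..1}|lborel. lst s) \<le> Lb"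
  shows "integrable M (\<lambda>x. LINT t:{0..1}|lborel. \<Prod>j\<in>{1..k}. PsiF l p h k \<sigma> jz lst j (t - \<omega> j x))"
    and "prob_space.expectation M (\<lambda>x. LINT t:{0..1}|lborel. \<Prod>j\<in>{1..k}. PsiF l p h k \<sigma> jz lst j (t - \<omega> j x))
       \<le> (\<Prod>j\<in>{1..k-1}. (1 - l j) powr (1 - p)) * (if jz \<in> {1..k-1} then 2 * h * K else 1) * Lb"
proof -
  have J: "finite {1..k}" "{1..k} \<subseteq> {1..}" by auto
  have B: "\<And>j. j \<in> {1..k} \<Longrightarrow> BM (PsiF l p h k \<sigma> jz lst j)"
    using lb lst(1) p by (intro PsiF_BM) auto
  have P: "\<And>j v. j \<in> {1..k} \<Longrightarrow> PsiF l p h k \<sigma> jz lst j (v + 1) = PsiF l p h k \<sigma> jz lst j v"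
    by (rule PsiF_per) (rule lst(3))
  show "integrable M (\<lambda>x. LINT t:{0..1}|lborel. \<Prod>j\<in>{1..k}. PsiF l p h k \<sigma> jz lst j (t - \<omega> j x))"
    by (rule G_main(1)[OF ps ind unif J B P])
  have "prob_space.expectation M (\<lambda>x. LINT t:{0..1}|lborel. \<Prod>j\<in>{1..k}. PsiF l p h k \<sigma> jz lst j (t - \<omega> j x))
     = (\<Prod>j\<in>{1..k}. LINT s:{0..1}|lborel. PsiF l p h k \<sigma> jz lst j s)"
    by (rule G_main(2)[OF ps ind unif J B P])
  also have "\<dots> \<le> (\<Prod>j\<in>{1..k-1}. (1 - l j) powr (1 - p)) * (if jz \<in> {1..k-1} then 2 * h * K else 1) * Lb"
    by (rule PsiF_int_bound[OF lb KK k p h lst(2) Lb])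
  finally show "prob_space.expectation M (\<lambda>x. LINT t:{0..1}|lborel. \<Prod>j\<in>{1..k}. PsiF l p h k \<sigma> jz lst j (t - \<omega> j x))
       \<le> (\<Prod>j\<in>{1..k-1}. (1 - l j) powr (1 - p)) * (if jz \<in> {1..k-1} then 2 * h * K else 1) * Lb" .
qed

lemma E_le:
  fixes f g :: "'a \<Rightarrow> real"
  assumes "\<And>x. x \<in> space M \<Longrightarrow> f x \<le> g x" "integrable M g" "integral\<^sup>L M g \<le> R" "0 \<le> R"
  shows "integral\<^sup>L M f \<le> R"
proof (cases "integrable M f")
  case True
  then have "integral\<^sup>L M f \<le> integral\<^sup>L M g" using assms by (intro integral_mono) auto
  then show ?thesis using assms by simp
next
  case False then show ?thesis using assms by (simp add: not_integrable_integral_eq)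
qed

lemma int_Yk:
  assumes L: "0 < L" "L < 1" and K: "1 / (1 - L) \<le> K"
  shows "(LINT s:{0..1}|lborel. \<bar>xF L s - 1\<bar>) \<le> 2 * K * L"
proof -
  have "(LINT s:{0..1}|lborel. \<bar>xF L s - 1\<bar>) \<le> (LINT s:{0..1}|lborel. L / (1 - L) + (1 / (1 - L)) * aF L s)"
  proof (rule int01_mono)
    show "BM (\<lambda>s. \<bar>xF L s - 1\<bar>)" using L by (intro BM_abs BM_diff BM_xF BM_const)
    show "BM (\<lambda>s. L / (1 - L) + 1 / (1 - L) * aF L s)" by (intro BM_add BM_mult BM_const BM_aF)
    fix t
    have a: "1 \<le> 1 / (1 - L)" "0 \<le> L / (1 - L)" using L by auto
    show "\<bar>xF L t - 1\<bar> \<le> L / (1 - L) + 1 / (1 - L) * aF L t"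
    proof (cases "aF L t = 0")
      case True
      then have "xF L t - 1 = L / (1 - L)" using L by (simp add: xF_def field_simps)
      then show ?thesis using True a by (simp only: abs_of_nonneg)
    next
      case False
      then have "aF L t = 1" using aF_01[of L t] by simp
      then have "xF L t = 0" by (simp add: xF_def)
      then show ?thesis using a \<open>aF L t = 1\<close> by simp
    qed
  qed
  also have "\<dots> = L / (1 - L) + (1 / (1 - L)) * L"
    by (subst int_lin[where b=1]) (use L aF_abs_le int_aF in auto)
  also have "\<dots> = 2 * (1 / (1 - L)) * L" by simp
  also have "\<dots> \<le> 2 * K * L" using K L by (intro mult_right_mono) auto
  finally show ?thesis .
qed

lemma int_X1:
  assumes L: "0 < L" "L < 1"
  shows "(LINT s:{0..1}|lborel. \<bar>xF L s - 0\<bar>) = 1"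
proof -
  have "(LINT s:{0..1}|lborel. \<bar>xF L s - 0\<bar>) = (LINT s:{0..1}|lborel. 1 / (1 - L) + (- 1 / (1 - L)) * aF L s)"
    using L xF_nonneg[of L] by (simp add: xF_def field_simps)
  also have "\<dots> = 1 / (1 - L) + (- 1 / (1 - L)) * L"
    by (subst int_lin[where b=1]) (use L aF_abs_le int_aF in auto)
  also have "\<dots> = 1" using L by (simp add: field_simps)
  finally show ?thesis .
qed

lemma int_V:
  assumes L: "0 < L" "L < 1" and K: "1 / (1 - L) \<le> K" and h: "0 < h"
  shows "(LINT s:{0..1}|lborel. \<bar>xF L (s + h) - xF L s\<bar>) \<le> 2 * h * K"
proof -
  have "(LINT s:{0..1}|lborel. \<bar>xF L (s + h) - xF L s\<bar>) = (LINT s:{0..1}|lborel. (1 / (1 - L)) * \<bar>aF L (s + h) - aF L s\<bar>)"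
  proof -
    have "\<bar>xF L (s + h) - xF L s\<bar> = (1 / (1 - L)) * \<bar>aF L (s + h) - aF L s\<bar>" for s
    proof -
      have "xF L (s + h) - xF L s = (aF L s - aF L (s + h)) / (1 - L)"
        unfolding xF_def by (subst diff_divide_distrib[symmetric]) simp
      then show ?thesis using L by (simp add: abs_div abs_minus_commute)
    qed
    then show ?thesis by simp
  qed
  also have "\<dots> = (1 / (1 - L)) * (LINT s:{0..1}|lborel. \<bar>aF L (s + h) - aF L s\<bar>)" by (rule int01_cmult)
  also have "\<dots> \<le> K * (2 * h)"
  proof (rule mult_mono)
    show "0 \<le> K" using K L by (smt (verit) divide_pos_pos)
    show "0 \<le> (LINT s:{0..1}|lborel. \<bar>aF L (s + h) - aF L s\<bar>)" by (rule int01_nonneg) simp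
  qed (use int_daF[OF h L] K in auto)
  finally show ?thesis by (simp add: mult.commute mult.left_commute)
qed

lemma powr_m1: "0 < (x::real) \<Longrightarrow> x powr (p - 1) * x = x powr p"
  by (simp add: powr_diff)

theorem proposition3p2:
  fixes l :: "nat \<Rightarrow> real" and p :: real
  assumes l_bounds: "\<And>k. k \<ge> 1 \<Longrightarrow> 0 < l k \<and> l k < 1"
    and l_mono: "\<And>k. k \<ge> 1 \<Longrightarrow> l (Suc k) \<le> l k"
    and p_bounds: "1 < p" "p \<le> 2"
  shows "\<exists>C::real. \<forall>(M :: 'a measure) (\<omega> :: nat \<Rightarrow> 'a \<Rightarrow> real).
     (prob_space M
      \<and> prob_space.indep_vars M (\<lambda>_. borel) \<omega> {1..}
      \<and> (\<forall>k\<ge>1. distr M borel (\<omega> k) = uniform_measure lborel {0..<1}))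
     \<longrightarrow>
     (\<forall>k\<ge>1. \<forall>h>0.
        prob_space.expectation M
          (\<lambda>x. (LINT t:{0..1}|lborel. \<bar>Df l (\<lambda>j. \<omega> j x) k (t + h) - Df l (\<lambda>j. \<omega> j x) k t\<bar>) powr p)
        \<le> C * (h powr p + h * real k * l k powr p) * (\<Prod>j\<in>{1..k-1}. (1 - l j) powr (1 - p)))
     \<and>
     (\<forall>k\<ge>1.
        prob_space.expectation M
          (\<lambda>x. (LINT t:{0..1}|lborel. \<bar>Df l (\<lambda>j. \<omega> j x) k t\<bar>) powr p)
        \<le> C * l k powr p * (\<Prod>j\<in>{1..k-1}. (1 - l j) powr (1 - p)))"
proof -
  have lb: "\<And>j. 1 \<le> j \<Longrightarrow> 0 < l j \<and> l j < 1" using l_bounds by auto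
  have p: "1 < p" using p_bounds by simp
  have lmono: "l j \<le> l 1" if "1 \<le> j" for j
    using that
  proof (induction j rule: dec_induct)
    case base then show ?case by simp
  next
    case (step n) then show ?case using l_mono[of n] by linarith
  qed
  have l1: "0 < l 1" "l 1 < 1" using lb[of 1] by auto
  define K where "K = 1 / (1 - l 1)"
  have KK: "1 / (1 - l j) \<le> K" if "1 \<le> j" for j
  proof -
    have "0 < 1 - l 1" "1 - l 1 \<le> 1 - l j" using l1 lmono[OF that] by auto
    then show ?thesis unfolding K_def by (intro divide_left_mono) auto
  qed
  have K1: "1 \<le> K" unfolding K_def using l1 by simp
  define Q where "Q = 2 * K / l 1"
  have Q0: "0 < Q" unfolding Q_def using K1 l1 by simp
  define Bk where "Bk k = Q * l k" for k
  have Bk0: "0 < Bk k" if "1 \<le> k" for k unfolding Bk_def using Q0 lb[OF that] by simp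
  have Ybound: "(LINT s:{0..1}|lborel. \<bar>xF (l k) s - (if k = 1 then 0 else 1)\<bar>) \<le> Bk k" if k: "1 \<le> k" for k
  proof (cases "k = 1")
    case True
    have "(LINT s:{0..1}|lborel. \<bar>xF (l k) s - (if k = 1 then 0 else 1)\<bar>) = 1"
      using True int_X1[OF l1] by simp
    also have "1 \<le> Bk k" unfolding Bk_def Q_def using True K1 l1 by simp
    finally show ?thesis .
  next
    case False
    have "(LINT s:{0..1}|lborel. \<bar>xF (l k) s - (if k = 1 then 0 else 1)\<bar>) \<le> 2 * K * l k"
      using False int_Yk[of "l k" K] lb[OF k] KK[OF k] by simp
    also have "\<dots> \<le> Bk k"
    proof -
      have "2 * K * l k = (2 * K / l 1) * l k * l 1" using l1 by simp
      also have "\<dots> \<le> (2 * K / l 1) * l k * 1"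
        using l1 lb[OF k] K1 by (intro mult_left_mono) auto
      finally show ?thesis unfolding Bk_def Q_def by simp
    qed
    finally show ?thesis .
  qed
  define C where "C = 2 powr p * ((2 * K) powr p + 4 * K * Q powr p) + Q powr p"
  have C0: "0 \<le> C" unfolding C_def using K1 by (intro add_nonneg_nonneg mult_nonneg_nonneg) auto
  show ?thesis
  proof (rule exI[of _ C], intro allI impI)
    fix M :: "'a measure" and \<omega> :: "nat \<Rightarrow> 'a \<Rightarrow> real"
    assume H: "prob_space M \<and> prob_space.indep_vars M (\<lambda>_. borel) \<omega> {1..}
      \<and> (\<forall>k\<ge>1. distr M borel (\<omega> k) = uniform_measure lborel {0..<1})"
    then have ps: "prob_space M" and ind: "prob_space.indep_vars M (\<lambda>_. borel) \<omega> {1..}"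
      and unif: "\<forall>k\<ge>1. distr M borel (\<omega> k) = uniform_measure lborel {0..<1}" by auto
    show "(\<forall>k\<ge>1. \<forall>h>0.
        prob_space.expectation M
          (\<lambda>x. (LINT t:{0..1}|lborel. \<bar>Df l (\<lambda>j. \<omega> j x) k (t + h) - Df l (\<lambda>j. \<omega> j x) k t\<bar>) powr p)
        \<le> C * (h powr p + h * real k * l k powr p) * (\<Prod>j\<in>{1..k-1}. (1 - l j) powr (1 - p)))
     \<and>
     (\<forall>k\<ge>1.
        prob_space.expectation M
          (\<lambda>x. (LINT t:{0..1}|lborel. \<bar>Df l (\<lambda>j. \<omega> j x) k t\<bar>) powr p)
        \<le> C * l k powr p * (\<Prod>j\<in>{1..k-1}. (1 - l j) powr (1 - p)))"
    proof (intro conjI allI impI)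
      fix k :: nat assume k: "1 \<le> k"
      define P where "P = (\<Prod>j\<in>{1..k-1}. (1 - l j) powr (1 - p))"
      have P0: "0 \<le> P" unfolding P_def by (intro prod_nonneg) auto
      define lastY where "lastY = (\<lambda>v. \<bar>xF (l k) v - (if k = 1 then 0 else 1)\<bar>)"
      have lk: "0 < l k" "l k < 1" using lb[OF k] by auto
      have BY: "BM lastY" unfolding lastY_def using lk by (intro BM_abs BM_diff BM_xF BM_const)
      have Y0: "\<And>v. 0 \<le> lastY v" unfolding lastY_def by simp
      have YP: "\<And>v. lastY (v + 1) = lastY v" unfolding lastY_def by (simp add: xF_per)
      have YB: "(LINT s:{0..1}|lborel. lastY s) \<le> Bk k" unfolding lastY_def by (rule Ybound[OF k])
      define G2 where "G2 x = (LINT t:{0..1}|lborel. \<Prod>j\<in>{1..k}. PsiF l p 1 k 0 0 lastY j (t - \<omega> j x))" for x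
      have iG2: "integrable M G2" unfolding G2_def
        by (rule E_Psi(1)[where h=1, OF ps ind unif lb KK k p _ BY Y0 YP YB]) auto
      have eG2: "prob_space.expectation M G2 \<le> P * 1 * Bk k" unfolding G2_def P_def
        using E_Psi(2)[where h=1 and \<sigma>=0 and jz=0, OF ps ind unif lb KK k p _ BY Y0 YP YB] by simp
      show "prob_space.expectation M
          (\<lambda>x. (LINT t:{0..1}|lborel. \<bar>Df l (\<lambda>j. \<omega> j x) k t\<bar>) powr p)
        \<le> C * l k powr p * (\<Prod>j\<in>{1..k-1}. (1 - l j) powr (1 - p))"
        unfolding P_def[symmetric]
      proof (rule E_le)
        fix x
        show "(LINT t:{0..1}|lborel. \<bar>Df l (\<lambda>j. \<omega> j x) k t\<bar>) powr p \<le> Bk k powr (p - 1) * G2 x"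
          unfolding G2_def lastY_def by (rule det_ii[where l=l and om="\<lambda>j. \<omega> j x", OF lb k p Ybound[OF k]])
      next
        show "integrable M (\<lambda>x. Bk k powr (p - 1) * G2 x)" using iG2 by simp
        have "prob_space.expectation M (\<lambda>x. Bk k powr (p - 1) * G2 x) = Bk k powr (p - 1) * prob_space.expectation M G2"
          by simp
        also have "\<dots> \<le> Bk k powr (p - 1) * (P * 1 * Bk k)" using eG2 by (intro mult_left_mono) auto
        also have "\<dots> = P * (Bk k powr (p - 1) * Bk k)" by simp
        also have "\<dots> = P * Bk k powr p" using powr_m1[OF Bk0[OF k]] by simp
        also have "\<dots> = P * (Q powr p * l k powr p)" unfolding Bk_def using Q0 lk by (simp add: powr_mult)
        also have "\<dots> \<le> P * (C * l k powr p)"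
        proof (intro mult_left_mono P0)
          have "Q powr p \<le> C" unfolding C_def using K1 by (simp add: add_increasing)
          then show "Q powr p * l k powr p \<le> C * l k powr p" by (intro mult_right_mono) auto
        qed
        finally show "prob_space.expectation M (\<lambda>x. Bk k powr (p - 1) * G2 x) \<le> C * l k powr p * P"
          by (simp add: mult.commute mult.left_commute)
        show "0 \<le> C * l k powr p * P" using C0 P0 by simp
      qed
    next
      fix k :: nat and h :: real assume k: "1 \<le> k" and h: "0 < h"
      define P where "P = (\<Prod>j\<in>{1..k-1}. (1 - l j) powr (1 - p))"
      have P0: "0 \<le> P" unfolding P_def by (intro prod_nonneg) auto
      define lastY where "lastY = (\<lambda>v. \<bar>xF (l k) v - (if k = 1 then 0 else 1)\<bar>)"
      define lastV where "lastV = (\<lambda>v. \<bar>xF (l k) (v + h) - xF (l k) v\<bar>)"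
      have lk: "0 < l k" "l k < 1" using lb[OF k] by auto
      have BY: "BM lastY" unfolding lastY_def using lk by (intro BM_abs BM_diff BM_xF BM_const)
      have Y0: "\<And>v. 0 \<le> lastY v" unfolding lastY_def by simp
      have YP: "\<And>v. lastY (v + 1) = lastY v" unfolding lastY_def by (simp add: xF_per)
      have YB: "(LINT s:{0..1}|lborel. lastY s) \<le> Bk k" unfolding lastY_def by (rule Ybound[OF k])
      define Vb where "Vb = 2 * h * K"
      have Vb0: "0 < Vb" unfolding Vb_def using h K1 by simp
      have BV: "BM lastV" unfolding lastV_def using lk by (intro BM_abs BM_diff BM_shift BM_xF)
      have V0: "\<And>v. 0 \<le> lastV v" unfolding lastV_def by simp
      have VP: "\<And>v. lastV (v + 1) = lastV v"
      proof -
        fix v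
        have "xF (l k) (v + 1 + h) = xF (l k) (v + h)" using xF_per[of "l k" "v + h"] by (simp add: algebra_simps)
        then show "lastV (v + 1) = lastV v" unfolding lastV_def by (simp add: xF_per)
      qed
      have VB: "(LINT s:{0..1}|lborel. lastV s) \<le> Vb" unfolding lastV_def Vb_def
        by (rule int_V[OF lk KK[OF k] h])
      define GA where "GA x = (LINT t:{0..1}|lborel. \<Prod>j\<in>{1..k}. PsiF l p h k h 0 lastV j (t - \<omega> j x))" for x
      define GB where "GB \<sigma> j0 x = (LINT t:{0..1}|lborel. \<Prod>j\<in>{1..k}. PsiF l p h k \<sigma> j0 lastY j (t - \<omega> j x))" for \<sigma> j0 x
      have iGA: "integrable M GA" unfolding GA_def
        by (rule E_Psi(1)[OF ps ind unif lb KK k p h BV V0 VP VB])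
      have eGA: "prob_space.expectation M GA \<le> P * 1 * Vb" unfolding GA_def P_def
        using E_Psi(2)[where \<sigma>=h and jz=0, OF ps ind unif lb KK k p h BV V0 VP VB] by simp
      have iGB: "integrable M (GB \<sigma> j0)" for \<sigma> j0 unfolding GB_def
        by (rule E_Psi(1)[OF ps ind unif lb KK k p h BY Y0 YP YB])
      have eGB: "prob_space.expectation M (GB \<sigma> j0) \<le> P * (2 * h * K) * Bk k" if "j0 \<in> {1..k-1}" for \<sigma> j0
        unfolding GB_def P_def
        using E_Psi(2)[where \<sigma>=\<sigma> and jz=j0, OF ps ind unif lb KK k p h BY Y0 YP YB] that by simp
      define g where "g x = 2 powr p * (Vb powr (p - 1) * GA x + Bk k powr (p - 1) * (\<Sum>j0\<in>{1..k-1}. GB h j0 x + GB 0 j0 x))" for x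
      have ig: "integrable M g" unfolding g_def
        by (intro integrable_mult_right Bochner_Integration.integrable_add Bochner_Integration.integrable_sum iGA iGB)
      have Eg: "prob_space.expectation M g = 2 powr p * (Vb powr (p - 1) * prob_space.expectation M GA
          + Bk k powr (p - 1) * (\<Sum>j0\<in>{1..k-1}. prob_space.expectation M (GB h j0) + prob_space.expectation M (GB 0 j0)))"
        unfolding g_def
        by (simp add: Bochner_Integration.integral_add Bochner_Integration.integral_sum iGA iGB
            Bochner_Integration.integrable_sum)
      have sumB: "(\<Sum>j0\<in>{1..k-1}. prob_space.expectation M (GB h j0) + prob_space.expectation M (GB 0 j0))
          \<le> (\<Sum>j0\<in>{1..k-1}. 2 * (P * (2 * h * K) * Bk k))"
      proof (rule sum_mono)
        fix j0 assume "j0 \<in> {1..k-1}"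
        from eGB[OF this, of h] eGB[OF this, of 0]
        show "prob_space.expectation M (GB h j0) + prob_space.expectation M (GB 0 j0) \<le> 2 * (P * (2 * h * K) * Bk k)"
          by linarith
      qed
      also have "\<dots> = real (k - 1) * (2 * (P * (2 * h * K) * Bk k))" by simp
      finally have sumB': "(\<Sum>j0\<in>{1..k-1}. prob_space.expectation M (GB h j0) + prob_space.expectation M (GB 0 j0))
          \<le> real (k - 1) * (2 * (P * (2 * h * K) * Bk k))" .
      have "prob_space.expectation M g \<le> 2 powr p * (Vb powr (p - 1) * (P * 1 * Vb)
          + Bk k powr (p - 1) * (real (k - 1) * (2 * (P * (2 * h * K) * Bk k))))"
        unfolding Eg
        by (intro mult_left_mono add_mono sumB' eGA) auto
      also have "\<dots> = 2 powr p * P * (Vb powr (p - 1) * Vb + 4 * K * h * real (k - 1) * (Bk k powr (p - 1) * Bk k))"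
        by (simp add: algebra_simps)
      also have "\<dots> = 2 powr p * P * (Vb powr p + 4 * K * h * real (k - 1) * Bk k powr p)"
        using powr_m1[OF Vb0] powr_m1[OF Bk0[OF k]] by simp
      also have "Vb powr p = (2 * K) powr p * h powr p"
        unfolding Vb_def using h K1 by (simp add: powr_mult[symmetric] algebra_simps)
      also have "Bk k powr p = Q powr p * l k powr p"
        unfolding Bk_def using Q0 lk by (simp add: powr_mult)
      also have "2 powr p * P * ((2 * K) powr p * h powr p + 4 * K * h * real (k - 1) * (Q powr p * l k powr p))
          \<le> 2 powr p * P * (((2 * K) powr p + 4 * K * Q powr p) * (h powr p + h * real k * l k powr p))"
      proof (intro mult_left_mono)
        have a: "0 \<le> (2 * K) powr p" "0 \<le> 4 * K * Q powr p" "0 \<le> h powr p" "0 \<le> h * real k * l k powr p"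
          using K1 h by auto
        have "4 * K * h * real (k - 1) * (Q powr p * l k powr p) = (4 * K * Q powr p) * (h * real (k - 1) * l k powr p)"
          by (simp add: algebra_simps)
        also have "\<dots> \<le> (4 * K * Q powr p) * (h * real k * l k powr p)"
          using a h by (intro mult_left_mono mult_right_mono) auto
        finally have b: "4 * K * h * real (k - 1) * (Q powr p * l k powr p) \<le> (4 * K * Q powr p) * (h * real k * l k powr p)" .
        have "(2 * K) powr p * h powr p + 4 * K * h * real (k - 1) * (Q powr p * l k powr p)
            \<le> (2 * K) powr p * h powr p + (4 * K * Q powr p) * (h * real k * l k powr p)"
          using b by linarith
        also have "\<dots> \<le> ((2 * K) powr p + 4 * K * Q powr p) * (h powr p + h * real k * l k powr p)"
        proof -
          have e: "((2 * K) powr p + 4 * K * Q powr p) * (h powr p + h * real k * l k powr p)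
            = (2 * K) powr p * h powr p + (4 * K * Q powr p) * (h * real k * l k powr p)
              + ((2 * K) powr p * (h * real k * l k powr p) + (4 * K * Q powr p) * h powr p)"
            by (simp add: algebra_simps)
          have "0 \<le> (2 * K) powr p * (h * real k * l k powr p)" "0 \<le> (4 * K * Q powr p) * h powr p"
            using a by (metis mult_nonneg_nonneg)+
          then show ?thesis unfolding e by linarith
        qed
        finally show "(2 * K) powr p * h powr p + 4 * K * h * real (k - 1) * (Q powr p * l k powr p)
            \<le> ((2 * K) powr p + 4 * K * Q powr p) * (h powr p + h * real k * l k powr p)" .
      qed (use P0 in auto)
      also have "\<dots> \<le> C * (h powr p + h * real k * l k powr p) * P"
      proof -
        have "2 powr p * ((2 * K) powr p + 4 * K * Q powr p) \<le> C" unfolding C_def by simp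
        moreover have "0 \<le> (h powr p + h * real k * l k powr p) * P" using h P0 by auto
        ultimately show ?thesis
          using mult_right_mono[of "2 powr p * ((2 * K) powr p + 4 * K * Q powr p)" C "(h powr p + h * real k * l k powr p) * P"]
          by (simp add: algebra_simps)
      qed
      finally have Egb: "prob_space.expectation M g \<le> C * (h powr p + h * real k * l k powr p) * P" .
      show "prob_space.expectation M
          (\<lambda>x. (LINT t:{0..1}|lborel. \<bar>Df l (\<lambda>j. \<omega> j x) k (t + h) - Df l (\<lambda>j. \<omega> j x) k t\<bar>) powr p)
        \<le> C * (h powr p + h * real k * l k powr p) * (\<Prod>j\<in>{1..k-1}. (1 - l j) powr (1 - p))"
        unfolding P_def[symmetric]
      proof (rule E_le[OF _ ig Egb])
        fix x
        show "(LINT t:{0..1}|lborel. \<bar>Df l (\<lambda>j. \<omega> j x) k (t + h) - Df l (\<lambda>j. \<omega> j x) k t\<bar>) powr p \<le> g x"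
          unfolding g_def GA_def GB_def lastV_def lastY_def
          by (rule det_i[where l=l and om="\<lambda>j. \<omega> j x", OF lb k p h Ybound[OF k] int_V[OF lk KK[OF k] h, folded Vb_def]])
        show "0 \<le> C * (h powr p + h * real k * l k powr p) * P" using C0 P0 h by auto
      qed
    qed
  qed
qed

end
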